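(* Consider the closed-loop system described in the context, where the plant satisfies Assumption A2, with fixed $\tau_p\ge0$. There exists $\kappa>0$ such that for every gain $k\in(0,\kappa)$ there exists $\bar T>0$ with the following property: let $r:[0,\infty)\to Y$ be a step function with finitely many discontinuity (jump) points such that the time difference between any two jump points is at least $\bar T$, and let $r_f\in Y$ denote its final value (its value after the last jump). If the initial state $(x(0),u_I(0))\in X=\mathbb{R}^n\times U$ satisfies $\|x(0)-\Xi(u_I(0))\|\le\varepsilon_0$, then $x(t)\to\Xi(u_{r_f})$, $u(t)\to u_{r_f}$ and $y(t)\to r_f$ as $t\to\infty$, at an exponential rate.
   Context: Plant: $\dot x=f(x,u)$, $y=g(x)$, $f\in C^2(\mathbb{R}^n\times\mathbb{R};\mathbb{R}^n)$, $g:\mathbb{R}^n\to\mathbb{R}$ locally Lipschitz. Fix $u_{min}<u_{max}$, $U=[u_{min},u_{max}]$, $U_\delta=[u_{min}-\delta,u_{max}+\delta]$. For $w\in\mathbb{R}$, $w^+=\max\{w,0\}$, $w^-=\min\{w,0\}$. Saturating integrator: $\dot u_I=\mathscr{S}(u_I,w)$, $\mathscr{S}(u_I,w)=w^+$ if $u_I\le u_{min}$, $w$ if $u_I\in(u_{min},u_{max})$, $w^-$ if $u_I\ge u_{max}$ (trajectories for $L^1$ inputs defined by continuous extension from polynomial inputs). For gains $k>0$, $\tau_p\ge0$ and reference $r(t)$, the closed-loop system is $\dot x=f(x,u_I+\tau_pk(r-g(x)))$, $\dot u_I=\mathscr{S}(u_I,k(r-g(x)))$, with plant input $u=u_I+\tau_pk(r-g(x))$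 and output $y=g(x)$. Assumption A1: there exist $\delta>0$, $\Xi\in C^1(U_\delta;\mathbb{R}^n)$ with $f(\Xi(u),u)=0$ on $U_\delta$, and $\varepsilon_0>0,\lambda>0,m\ge1$ such that for each constant $u_0\in U_\delta$, solutions of $\dot x=f(x,u_0)$ with $\|x(0)-\Xi(u_0)\|\le\varepsilon_0$ satisfy $\|x(t)-\Xi(u_0)\|\le me^{-\lambda t}\|x(0)-\Xi(u_0)\|$, $t\ge0$. Assumption A2: A1 holds and $G(u):=g(\Xi(u))$ satisfies $G(b)-G(a)\ge\mu(b-a)$ for all $a<b$ in $U_\delta$, some $\mu>0$. $Y=[G(u_{min}),G(u_{max})]$; for $r\in Y$, $u_r=G^{-1}(r)$. *)

theory Defs
  imports "HOL-Analysis.Analysis"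
begin

definition sat_int :: "real \<Rightarrow> real \<Rightarrow> real \<Rightarrow> real \<Rightarrow> real" where
  "sat_int umin umax uI w =
     (if uI \<le> umin then max w 0 else if uI < umax then w else min w 0)"

definition C2 :: "('a::real_normed_vector \<Rightarrow> 'b::real_normed_vector) \<Rightarrow> bool" where
  "C2 F \<longleftrightarrow> (\<exists>DF D2F.
      (\<forall>z. (F has_derivative blinfun_apply (DF z)) (at z)) \<and>
      (\<forall>z. (DF has_derivative blinfun_apply (D2F z)) (at z)) \<and>
      continuous_on UNIV D2F)"

definition locally_lipschitz :: "('a::metric_space \<Rightarrow> real) \<Rightarrow> bool" where
  "locally_lipschitz F \<longleftrightarrow>
     (\<forall>z. \<exists>e>0. \<exists>L. \<forall>a\<in>ball z e. \<forall>b\<in>ball z e. dist (F a) (F b) \<le> L * dist a b)"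

definition C1_on :: "real set \<Rightarrow> (real \<Rightarrow> 'b::real_normed_vector) \<Rightarrow> bool" where
  "C1_on S F \<longleftrightarrow> (\<exists>DF. (\<forall>u\<in>S. (F has_vector_derivative DF u) (at u within S))
                       \<and> continuous_on S DF)"

definition assumption_A1 ::
  "('n::real_normed_vector \<Rightarrow> real \<Rightarrow> 'n) \<Rightarrow> real \<Rightarrow> real \<Rightarrow> real \<Rightarrow> (real \<Rightarrow> 'n)
     \<Rightarrow> real \<Rightarrow> real \<Rightarrow> real \<Rightarrow> bool" where
  "assumption_A1 f umin umax \<delta> \<Xi> \<epsilon>0 lam m \<longleftrightarrow>
     \<delta> > 0 \<and> C1_on {umin - \<delta> .. umax + \<delta>} \<Xi> \<and>
     (\<forall>u\<in>{umin - \<delta> .. umax + \<delta>}. f (\<Xi> u) u = 0) \<and>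
     \<epsilon>0 > 0 \<and> lam > 0 \<and> m \<ge> 1 \<and>
     (\<forall>u0\<in>{umin - \<delta> .. umax + \<delta>}. \<forall>T (x::real \<Rightarrow> 'n).
        (\<forall>t\<in>{0..T}. (x has_vector_derivative f (x t) u0) (at t within {0..T})) \<and>
        norm (x 0 - \<Xi> u0) \<le> \<epsilon>0 \<longrightarrow>
        (\<forall>t\<in>{0..T}. norm (x t - \<Xi> u0) \<le> m * exp (- lam * t) * norm (x 0 - \<Xi> u0)))"

definition closed_loop_solution ::
  "('n::real_normed_vector \<Rightarrow> real \<Rightarrow> 'n) \<Rightarrow> ('n \<Rightarrow> real) \<Rightarrow> real \<Rightarrow> real \<Rightarrow> real \<Rightarrow> real
     \<Rightarrow> (real \<Rightarrow> real) \<Rightarrow> (real \<Rightarrow> 'n) \<Rightarrow> (real \<Rightarrow> real) \<Rightarrow> bool" where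
  "closed_loop_solution f g umin umax \<tau>p k r x uI \<longleftrightarrow>
     (\<forall>t\<ge>0.
        ((\<lambda>s. f (x s) (uI s + \<tau>p * k * (r s - g (x s)))) has_integral (x t - x 0)) {0..t} \<and>
        ((\<lambda>s. sat_int umin umax (uI s) (k * (r s - g (x s)))) has_integral (uI t - uI 0)) {0..t})"

end

theory Submission
  imports Defs "HOL-Analysis.Analysis"
begin


lemma first_crossing:
  fixes \<phi> :: "real \<Rightarrow> real"
  assumes "continuous_on {a..b} \<phi>" "\<phi> a < c" "c \<le> \<phi> b" "a \<le> b"
  shows "\<exists>s\<in>{a<..b}. \<phi> s = c \<and> (\<forall>\<sigma>\<in>{a..<s}. \<phi> \<sigma> < c)"
proof -
  let ?T = "{s\<in>{a..b}. c \<le> \<phi> s}"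
  have "closed ({a..b} \<inter> \<phi> -` {c..})"
    using assms(1) by (intro continuous_closed_preimage) auto
  moreover have "{a..b} \<inter> \<phi> -` {c..} = ?T" by auto
  ultimately have cl: "closed ?T" by simp
  have "compact ?T" using cl by (auto simp: compact_eq_bounded_closed intro: bounded_subset[of "{a..b}"])
  moreover have "?T \<noteq> {}" using assms by auto
  ultimately obtain s where s: "s \<in> ?T" "\<And>t. t \<in> ?T \<Longrightarrow> s \<le> t"
    using compact_attains_inf[of ?T] by auto
  have sa: "a < s" using s assms by (cases "s = a") auto
  have less: "\<forall>\<sigma>\<in>{a..<s}. \<phi> \<sigma> < c" using s by force
  have "\<phi> s = c"
  proof (rule ccontr)
    assume "\<phi> s \<noteq> c"
    then have "\<phi> a \<le> c" "c \<le> \<phi> s" using s assms by auto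
    moreover have "continuous_on {a..s} \<phi>" using assms(1) s by (auto intro: continuous_on_subset)
    ultimately obtain x where "a \<le> x" "x \<le> s" "\<phi> x = c" using IVT'[of \<phi> a c s] sa by auto
    then show False using \<open>\<phi> s \<noteq> c\<close> less by (cases "x = s") auto
  qed
  then show ?thesis using sa s less by auto
qed

lemma last_crossing:
  fixes \<phi> :: "real \<Rightarrow> real"
  assumes "continuous_on {a..b} \<phi>" "\<phi> a \<le> c" "c < \<phi> b" "a \<le> b"
  shows "\<exists>s\<in>{a..<b}. \<phi> s = c \<and> (\<forall>\<sigma>\<in>{s<..b}. c < \<phi> \<sigma>)"
proof -
  let ?T = "{s\<in>{a..b}. \<phi> s \<le> c}"
  have "closed ({a..b} \<inter> \<phi> -` {..c})"
    using assms(1) by (intro continuous_closed_preimage) auto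
  moreover have "{a..b} \<inter> \<phi> -` {..c} = ?T" by auto
  ultimately have cl: "closed ?T" by simp
  have "compact ?T" using cl by (auto simp: compact_eq_bounded_closed intro: bounded_subset[of "{a..b}"])
  moreover have "?T \<noteq> {}" using assms by auto
  ultimately obtain s where s: "s \<in> ?T" "\<And>t. t \<in> ?T \<Longrightarrow> t \<le> s"
    using compact_attains_sup[of ?T] by auto
  have sb: "s < b" using s assms by (cases "s = b") auto
  have gr: "\<forall>\<sigma>\<in>{s<..b}. c < \<phi> \<sigma>"
  proof
    fix \<sigma> assume h: "\<sigma> \<in> {s<..b}"
    show "c < \<phi> \<sigma>"
    proof (rule ccontr)
      assume "\<not> c < \<phi> \<sigma>"
      then have "\<sigma> \<in> ?T" using h s(1) by auto
      then show False using s(2)[of \<sigma>] h by auto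
    qed
  qed
  have "\<phi> s = c"
  proof (rule ccontr)
    assume "\<phi> s \<noteq> c"
    then have "\<phi> s \<le> c" "c \<le> \<phi> b" using s assms by auto
    moreover have "continuous_on {s..b} \<phi>" using assms(1) s by (auto intro: continuous_on_subset)
    ultimately obtain x where "s \<le> x" "x \<le> b" "\<phi> x = c" using IVT'[of \<phi> s c b] sb by auto
    then show False using \<open>\<phi> s \<noteq> c\<close> gr by (cases "x = s") auto
  qed
  then show ?thesis using sb s gr by auto
qed

lemma barrier:
  fixes \<phi> :: "real \<Rightarrow> real"
  assumes "continuous_on {a..b} \<phi>" "\<phi> a < R"
    and step: "\<And>s. s \<in> {a..b} \<Longrightarrow> (\<forall>\<sigma>\<in>{a..s}. \<phi> \<sigma> \<le> R) \<Longrightarrow> \<phi> s < R"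
  shows "\<forall>s\<in>{a..b}. \<phi> s < R"
proof (rule ccontr)
  assume "\<not> ?thesis"
  then obtain s where s: "s \<in> {a..b}" "R \<le> \<phi> s" by force
  have "continuous_on {a..s} \<phi>" using assms(1) s by (auto intro: continuous_on_subset)
  then obtain s1 where s1: "s1 \<in> {a<..s}" "\<phi> s1 = R" "\<forall>\<sigma>\<in>{a..<s1}. \<phi> \<sigma> < R"
    using first_crossing[of a s \<phi> R] s assms by auto
  have "\<forall>\<sigma>\<in>{a..s1}. \<phi> \<sigma> \<le> R"
  proof
    fix \<sigma> assume "\<sigma> \<in> {a..s1}"
    show "\<phi> \<sigma> \<le> R"
    proof (cases "\<sigma> = s1")
      case True then show ?thesis using s1(2) by simp
    next
      case False
      then have "\<sigma> \<in> {a..<s1}" using \<open>\<sigma> \<in> {a..s1}\<close> by auto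
      then show ?thesis using s1(3) by fastforce
    qed
  qed
  then have "\<phi> s1 < R" using step[of s1] s1 s by auto
  then show False using s1 by simp
qed

lemma gronwall:
  fixes \<phi> :: "real \<Rightarrow> real"
  assumes cont: "continuous_on {a..b} \<phi>" and L: "L \<ge> 0"
    and le: "\<And>t. t \<in> {a..b} \<Longrightarrow> \<phi> t \<le> c + L * integral {a..t} \<phi>"
    and t: "t \<in> {a..b}"
  shows "\<phi> t \<le> c * exp (L * (t - a))"
proof -
  define \<Psi> where "\<Psi> t = c + L * integral {a..t} \<phi>" for t
  define \<Phi> where "\<Phi> t = exp (- L * (t - a)) * \<Psi> t" for t
  have dPsi: "(\<Psi> has_real_derivative L * \<phi> s) (at s within {a..b})" if "s \<in> {a..b}" for s
    unfolding \<Psi>_def using integral_has_real_derivative[OF cont that]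
    by (auto intro!: derivative_eq_intros)
  have dPhi: "(\<Phi> has_real_derivative (exp (- L * (s - a)) * (L * \<phi> s - L * \<Psi> s))) (at s within {a..b})"
    if "s \<in> {a..b}" for s
    unfolding \<Phi>_def using dPsi[OF that]
    by (auto intro!: derivative_eq_intros simp: algebra_simps)
  have ab: "a \<le> t" "t \<le> b" using t by auto
  have "((\<lambda>s. exp (- L * (s - a)) * (L * \<phi> s - L * \<Psi> s)) has_integral (\<Phi> t - \<Phi> a)) {a..t}"
    apply (rule fundamental_theorem_of_calculus[OF ab(1)])
    apply (rule has_vector_derivative_within_subset[of _ _ _ "{a..b}"])
    using dPhi ab by (auto simp: has_real_derivative_iff_has_vector_derivative[symmetric])
  moreover have "exp (- L * (s - a)) * (L * \<phi> s - L * \<Psi> s) \<le> 0" if "s \<in> {a..t}" for s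
  proof -
    have "\<phi> s \<le> \<Psi> s" using le[of s] that ab unfolding \<Psi>_def by auto
    then have "L * \<phi> s \<le> L * \<Psi> s" using L by (simp add: mult_left_mono)
    then show ?thesis by (simp add: mult_nonneg_nonpos)
  qed
  ultimately have "\<Phi> t - \<Phi> a \<le> 0"
    using has_integral_le[OF _ has_integral_0, of _ "\<Phi> t - \<Phi> a" "{a..t}"] by blast
  then have "exp (- L * (t - a)) * \<Psi> t \<le> c" by (simp add: \<Phi>_def \<Psi>_def)
  moreover have "exp (L * (t - a)) * exp (- L * (t - a)) = 1"
    by (simp add: exp_add[symmetric])
  ultimately have "\<Psi> t \<le> c * exp (L * (t - a))"
  proof -
    assume h1: "exp (- L * (t - a)) * \<Psi> t \<le> c" and h2: "exp (L * (t - a)) * exp (- L * (t - a)) = 1"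
    have "\<Psi> t = exp (L * (t - a)) * (exp (- L * (t - a)) * \<Psi> t)"
      using h2 by (simp add: mult.assoc[symmetric])
    also have "\<dots> \<le> exp (L * (t - a)) * c" using h1 by (intro mult_left_mono) auto
    finally show ?thesis by (simp add: mult.commute)
  qed
  moreover have "\<phi> t \<le> \<Psi> t" using le[OF t] by (simp add: \<Psi>_def)
  ultimately show ?thesis by linarith
qed

lemma integral_sub:
  fixes \<phi> :: "real \<Rightarrow> 'a::banach"
  assumes "\<forall>t\<ge>0. (\<phi> has_integral (X t - X 0)) {0..t}" "0 \<le> a" "a \<le> b"
  shows "(\<phi> has_integral (X b - X a)) {a..b}"
proof -
  have b0: "0 \<le> b" using assms(2,3) by linarith
  have ib: "(\<phi> has_integral (X b - X 0)) {0..b}" using assms(1)[rule_format, OF b0] .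
  have ia: "(\<phi> has_integral (X a - X 0)) {0..a}" using assms(1)[rule_format, OF assms(2)] .
  have intb: "\<phi> integrable_on {0..b}" using ib by (rule has_integral_integrable)
  have sub: "{a..b} \<subseteq> {0..b}" using assms(2) by auto
  have "\<phi> integrable_on {a..b}" by (rule integrable_subinterval_real[OF intb sub])
  moreover have "integral {0..a} \<phi> + integral {a..b} \<phi> = integral {0..b} \<phi>"
    by (rule Henstock_Kurzweil_Integration.integral_combine[OF assms(2) assms(3) intb])
  moreover have "integral {0..a} \<phi> = X a - X 0" using ia by (rule integral_unique)
  moreover have "integral {0..b} \<phi> = X b - X 0" using ib by (rule integral_unique)
  ultimately have "integral {a..b} \<phi> = X b - X a" by (simp add: algebra_simps)
  with \<open>\<phi> integrable_on {a..b}\<close> show ?thesis by (metis integrable_integral)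
qed

lemma cont_from_integral:
  fixes \<phi> :: "real \<Rightarrow> 'a::banach"
  assumes "\<forall>t\<ge>0. (\<phi> has_integral (X t - X 0)) {0..t}" "0 \<le> T"
  shows "continuous_on {0..T} X"
proof -
  have "\<phi> integrable_on {0..T}" using assms by (auto simp: has_integral_integrable)
  then have c: "continuous_on {0..T} (\<lambda>t. integral {0..t} \<phi>)" by (rule indefinite_integral_continuous_1)
  have "X t = X 0 + integral {0..t} \<phi>" if "t \<in> {0..T}" for t
  proof -
    have "(\<phi> has_integral (X t - X 0)) {0..t}" using assms(1)[rule_format, of t] that by simp
    then show ?thesis by (simp add: integral_unique)
  qed
  then show ?thesis using continuous_on_eq[OF continuous_on_add[OF continuous_on_const c]] by metis
qed


fun picard :: "('a::banach \<Rightarrow> 'a) \<Rightarrow> real \<Rightarrow> 'a \<Rightarrow> nat \<Rightarrow> real \<Rightarrow> 'a" where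
  "picard F a z0 0 = (\<lambda>t. z0)"
| "picard F a z0 (Suc n) = (\<lambda>t. z0 + integral {a..t} (\<lambda>s. F (picard F a z0 n s)))"

lemma picard_cont:
  assumes "continuous_on UNIV F"
  shows "continuous_on {a..b} (picard F a z0 n)"
proof (induction n)
  case 0 then show ?case by simp
next
  case (Suc n)
  have "continuous_on {a..b} (\<lambda>s. F (picard F a z0 n s))"
    using continuous_on_compose2[OF assms Suc] by auto
  then have "(\<lambda>s. F (picard F a z0 n s)) integrable_on {a..b}" by (rule integrable_continuous_real)
  then have "continuous_on {a..b} (\<lambda>t. integral {a..t} (\<lambda>s. F (picard F a z0 n s)))"
    by (rule indefinite_integral_continuous_1)
  then show ?case by (auto intro!: continuous_intros)
qed

lemma integral_power_shift:
  assumes "a \<le> t"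
  shows "((\<lambda>s. (s - a) ^ n) has_integral (t - a) ^ Suc n / Suc n) {a..t}"
proof -
  have d: "((\<lambda>s. (s - a) ^ Suc n / Suc n) has_real_derivative (s - a) ^ n) (at s within {a..t})" for s
    by (rule derivative_eq_intros refl | simp)+
  have "((\<lambda>s. (s - a) ^ n) has_integral ((t - a) ^ Suc n / Suc n - (a - a) ^ Suc n / Suc n)) {a..t}"
    by (rule fundamental_theorem_of_calculus[OF assms])
       (use d in \<open>auto simp: has_real_derivative_iff_has_vector_derivative[symmetric]\<close>)
  then show ?thesis by simp
qed

lemma picard_diff:
  fixes F :: "'a::banach \<Rightarrow> 'a"
  assumes Fc: "continuous_on UNIV F"
    and Lip: "\<And>y y'. norm (F y - F y') \<le> L * norm (y - y')" and L: "0 \<le> L"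
    and Mb: "\<And>y. norm (F y) \<le> M"
  shows "t \<in> {a..b} \<Longrightarrow> norm (picard F a z0 (Suc n) t - picard F a z0 n t) \<le> M * L^n * (t - a)^(Suc n) / fact (Suc n)"
proof (induction n arbitrary: t)
  case 0
  then have "a \<le> t" by auto
  moreover have "(t - a) * norm (F z0) \<le> (t - a) * M"
    using Mb[of z0] \<open>a \<le> t\<close> by (intro mult_left_mono) auto
  ultimately have "norm (integral {a..t} (\<lambda>s. F z0)) \<le> M * (t - a)"
    by (simp add: mult.commute)
  then show ?case by simp
next
  case (Suc n)
  let ?p = "picard F a z0"
  have ab: "a \<le> t" "t \<le> b" using Suc.prems by auto
  have sub: "{a..t} \<subseteq> {a..b}" using ab by auto
  have pc: "continuous_on {a..t} (?p k)" for k
    using continuous_on_subset[OF picard_cont[OF Fc] sub] .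
  have int1: "(\<lambda>s. F (?p (Suc n) s)) integrable_on {a..t}"
    by (rule integrable_continuous_real[OF continuous_on_compose2[OF Fc pc subset_UNIV]])
  have int0: "(\<lambda>s. F (?p n s)) integrable_on {a..t}"
    by (rule integrable_continuous_real[OF continuous_on_compose2[OF Fc pc subset_UNIV]])
  have eq: "?p (Suc (Suc n)) t - ?p (Suc n) t = integral {a..t} (\<lambda>s. F (?p (Suc n) s) - F (?p n s))"
    using integral_diff[OF int1 int0] by simp
  define C where "C = L * (M * L^n / fact (Suc n))"
  have "norm (integral {a..t} (\<lambda>s. F (?p (Suc n) s) - F (?p n s))) \<le> integral {a..t} (\<lambda>s. C * (s - a) ^ Suc n)"
  proof (rule integral_norm_bound_integral)
    show "(\<lambda>s. F (?p (Suc n) s) - F (?p n s)) integrable_on {a..t}" using int1 int0 by (rule integrable_diff)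
    show "(\<lambda>s. C * (s - a) ^ Suc n) integrable_on {a..t}"
      by (rule integrable_continuous_real) (auto intro!: continuous_intros)
    fix s assume s: "s \<in> {a..t}"
    have "norm (F (?p (Suc n) s) - F (?p n s)) \<le> L * norm (?p (Suc n) s - ?p n s)" by (rule Lip)
    also have "\<dots> \<le> L * (M * L^n * (s - a)^(Suc n) / fact (Suc n))"
      by (rule mult_left_mono[OF Suc.IH[of s] L]) (use s sub in auto)
    also have "\<dots> = C * (s - a) ^ Suc n" by (simp add: C_def)
    finally show "norm (F (?p (Suc n) s) - F (?p n s)) \<le> C * (s - a) ^ Suc n" .
  qed
  also have "integral {a..t} (\<lambda>s. C * (s - a) ^ Suc n) = C * ((t - a) ^ Suc (Suc n) / Suc (Suc n))"
    by (rule integral_unique, rule has_integral_mult_right, rule integral_power_shift[OF ab(1)])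
  also have "\<dots> = M * L^(Suc n) * (t - a)^(Suc (Suc n)) / fact (Suc (Suc n))"
    by (simp add: C_def fact_Suc[of "Suc n"] field_simps)
  finally show ?case using eq by simp
qed


lemma picard_exists:
  fixes F :: "'a::banach \<Rightarrow> 'a" and a b :: real
  assumes Lip: "\<And>y y'. norm (F y - F y') \<le> L * norm (y - y')" and L: "0 \<le> L"
    and Mb: "\<And>y. norm (F y) \<le> M" and ab: "a \<le> b"
  shows "\<exists>z. z a = z0 \<and> continuous_on {a..b} z \<and> (\<forall>t\<in>{a..b}. z t = z0 + integral {a..t} (\<lambda>s. F (z s)))"
proof -
  have "L-lipschitz_on UNIV F" using Lip L by (auto simp: lipschitz_on_def dist_norm)
  then have Fc: "continuous_on UNIV F" by (rule lipschitz_on_continuous_on)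
  let ?p = "picard F a z0"
  define c where "c n = M * L^n * (b - a)^(Suc n) / fact (Suc n)" for n
  have M0: "0 \<le> M" using Mb[of z0] norm_ge_zero order_trans by blast
  have c0: "0 \<le> c n" for n using M0 L ab by (simp add: c_def)
  have dbound: "norm (?p (Suc n) t - ?p n t) \<le> c n" if "t \<in> {a..b}" for n t
  proof -
    have "norm (?p (Suc n) t - ?p n t) \<le> M * L^n * (t - a)^(Suc n) / fact (Suc n)"
      by (rule picard_diff[OF Fc Lip L Mb that])
    also have "\<dots> \<le> c n" unfolding c_def using that M0 L
      by (intro divide_right_mono mult_left_mono power_mono) auto
    finally show ?thesis .
  qed
  have csum: "summable c"
  proof (rule summable_comparison_test')
    show "summable (\<lambda>n. M * (b - a) * (inverse (fact n) * (L * (b - a)) ^ n))"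
      by (intro summable_mult summable_exp)
    fix n :: nat
    have ff: "(fact n::real) \<le> fact (Suc n)" by (rule fact_mono) simp
    have "(b - a) ^ Suc n / fact (Suc n) \<le> (b - a) ^ Suc n / fact n"
      by (rule divide_left_mono[OF ff]) (use ab in auto)
    then have "(b - a) ^ Suc n / fact (Suc n) \<le> (b - a) * (b - a) ^ n / fact n" by simp
    then have "M * L^n * ((b - a) ^ Suc n / fact (Suc n)) \<le> M * L^n * ((b - a) * (b - a) ^ n / fact n)"
      using M0 L by (intro mult_left_mono) auto
    moreover have "norm (c n) = M * L^n * ((b - a) ^ Suc n / fact (Suc n))"
      using c0[of n] unfolding real_norm_def by (simp only: abs_of_nonneg) (simp add: c_def)
    moreover have "M * (b - a) * (inverse (fact n) * (L * (b - a)) ^ n) = M * L^n * ((b - a) * (b - a) ^ n / fact n)"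
      by (simp add: power_mult_distrib divide_inverse mult_ac)
    ultimately show "norm (c n) \<le> M * (b - a) * (inverse (fact n) * (L * (b - a)) ^ n)"
      by simp
  qed
  define d where "d n t = ?p (Suc n) t - ?p n t" for n t
  have psum: "?p n t = z0 + (\<Sum>i<n. d i t)" for n t
    by (induction n) (auto simp: d_def)
  have summ: "summable (\<lambda>i. d i t)" if "t \<in> {a..b}" for t
    by (rule summable_comparison_test'[OF csum]) (use dbound[OF that] in \<open>auto simp: d_def\<close>)
  define z where "z t = z0 + (\<Sum>i. d i t)" for t
  define tl where "tl n = (\<Sum>i. c (i + n))" for n
  have tail: "norm (z t - ?p n t) \<le> tl n" if "t \<in> {a..b}" for n t
  proof -
    have "z t - ?p n t = (\<Sum>i. d (i + n) t)"
      using suminf_minus_initial_segment[OF summ[OF that], of n] by (simp add: z_def psum)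
    also have "norm \<dots> \<le> tl n" unfolding tl_def
      by (rule norm_suminf_le) (use dbound[OF that] csum in \<open>auto simp: d_def summable_iff_shift\<close>)
    finally show ?thesis .
  qed
  have tl0: "tl \<longlonglongrightarrow> 0"
  proof -
    have "tl = (\<lambda>n. suminf c - (\<Sum>i<n. c i))"
      using suminf_minus_initial_segment[OF csum] by (simp add: tl_def fun_eq_iff)
    moreover have "(\<lambda>n. suminf c - (\<Sum>i<n. c i)) \<longlonglongrightarrow> suminf c - suminf c"
      by (intro tendsto_intros summable_LIMSEQ csum)
    ultimately show ?thesis by simp
  qed
  have unif: "uniform_limit {a..b} ?p z sequentially"
    unfolding uniform_limit_iff
  proof (intro allI impI)
    fix e :: real assume "0 < e"
    then have "eventually (\<lambda>n. tl n < e) sequentially" using tl0 by (rule order_tendstoD(2)[rotated])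
    then show "eventually (\<lambda>n. \<forall>t\<in>{a..b}. dist (?p n t) (z t) < e) sequentially"
    proof eventually_elim
      case (elim n)
      show ?case
      proof
        fix t assume "t \<in> {a..b}"
        then have "norm (z t - ?p n t) \<le> tl n" by (rule tail)
        then show "dist (?p n t) (z t) < e" using elim by (simp add: dist_norm norm_minus_commute)
      qed
    qed
  qed
  have zc: "continuous_on {a..b} z"
    by (rule uniform_limit_theorem[OF _ unif]) (auto intro!: always_eventually picard_cont[OF Fc])
  have za: "z a = z0"
  proof -
    have "d i a = 0" for i by (cases i) (auto simp: d_def)
    then show ?thesis by (simp add: z_def)
  qed
  have eqn: "z t = z0 + integral {a..t} (\<lambda>s. F (z s))" if t: "t \<in> {a..b}" for t
  proof -
    have sub: "{a..t} \<subseteq> {a..b}" using t by auto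
    have at: "a \<le> t" using t by auto
    have zc': "continuous_on {a..t} z" using continuous_on_subset[OF zc sub] .
    have pc: "continuous_on {a..t} (?p k)" for k
      using continuous_on_subset[OF picard_cont[OF Fc] sub] .
    have intz: "(\<lambda>s. F (z s)) integrable_on {a..t}"
      by (rule integrable_continuous_real[OF continuous_on_compose2[OF Fc zc' subset_UNIV]])
    have intp: "(\<lambda>s. F (?p k s)) integrable_on {a..t}" for k
      by (rule integrable_continuous_real[OF continuous_on_compose2[OF Fc pc subset_UNIV]])
    let ?err = "norm (z t - (z0 + integral {a..t} (\<lambda>s. F (z s))))"
    have bnd: "?err \<le> tl (Suc n) + L * (b - a) * tl n" for n
    proof -
      have "z t - (z0 + integral {a..t} (\<lambda>s. F (z s))) =
            (z t - ?p (Suc n) t) + integral {a..t} (\<lambda>s. F (?p n s) - F (z s))"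
        using integral_diff[OF intp intz] by simp
      also have "norm \<dots> \<le> norm (z t - ?p (Suc n) t) + norm (integral {a..t} (\<lambda>s. F (?p n s) - F (z s)))"
        by (rule norm_triangle_ineq)
      also have "norm (integral {a..t} (\<lambda>s. F (?p n s) - F (z s))) \<le> integral {a..t} (\<lambda>s. L * tl n)"
      proof (rule integral_norm_bound_integral)
        show "(\<lambda>s. F (?p n s) - F (z s)) integrable_on {a..t}" using intp intz by (rule integrable_diff)
        show "(\<lambda>s. L * tl n) integrable_on {a..t}" by (rule integrable_continuous_real) simp
        fix s assume s: "s \<in> {a..t}"
        have "norm (F (?p n s) - F (z s)) \<le> L * norm (?p n s - z s)" by (rule Lip)
        also have "\<dots> \<le> L * tl n" using tail[of s n] s sub L
          by (intro mult_left_mono) (auto simp: norm_minus_commute)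
        finally show "norm (F (?p n s) - F (z s)) \<le> L * tl n" .
      qed
      also have "integral {a..t} (\<lambda>s. L * tl n) = (t - a) * (L * tl n)" using at by simp
      also have "\<dots> \<le> (b - a) * (L * tl n)"
      proof -
        have "0 \<le> tl n" using tail[OF t, of n] norm_ge_zero order_trans by blast
        then show ?thesis using t L by (intro mult_right_mono) auto
      qed
      finally show ?thesis using tail[OF t, of "Suc n"] by (simp add: algebra_simps)
    qed
    have "(\<lambda>n. tl (Suc n) + L * (b - a) * tl n) \<longlonglongrightarrow> 0 + L * (b - a) * 0"
      by (intro tendsto_intros tl0 LIMSEQ_Suc)
    then have lim: "(\<lambda>n. tl (Suc n) + L * (b - a) * tl n) \<longlonglongrightarrow> 0" by simp
    have "?err \<le> 0"
      by (rule LIMSEQ_le_const[OF lim]) (use bnd in blast)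
    then show ?thesis by simp
  qed
  show ?thesis using za zc eqn by blast
qed


locale plant =
  fixes f :: "real^'n \<Rightarrow> real \<Rightarrow> real^'n" and g :: "real^'n \<Rightarrow> real" and \<Xi> :: "real \<Rightarrow> real^'n"
    and umin umax \<epsilon>0 lam m \<mu> \<tau>p c0 L M LX Lg Mg Yb h :: real
  assumes umin_less: "umin < umax"
    and eps0: "0 < \<epsilon>0" and lam: "0 < lam" and m1: "1 \<le> m" and mu: "0 < \<mu>" and taup: "0 \<le> \<tau>p"
    and A1: "\<And>u0 T x t. u0 \<in> {umin..umax} \<Longrightarrow>
        (\<forall>t\<in>{0..T}. (x has_vector_derivative f (x t) u0) (at t within {0..T})) \<Longrightarrow>
        norm (x 0 - \<Xi> u0) \<le> \<epsilon>0 \<Longrightarrow> t \<in> {0..T} \<Longrightarrow>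
        norm (x t - \<Xi> u0) \<le> m * exp (- lam * t) * norm (x 0 - \<Xi> u0)"
    and c0: "\<And>u. u \<in> {umin..umax} \<Longrightarrow> norm (\<Xi> u) \<le> c0"
    and fLip: "\<And>x x' u u'. x \<in> cball 0 (c0 + m * \<epsilon>0 + 1) \<Longrightarrow> x' \<in> cball 0 (c0 + m * \<epsilon>0 + 1) \<Longrightarrow>
        u \<in> {umin - 1..umax + 1} \<Longrightarrow> u' \<in> {umin - 1..umax + 1} \<Longrightarrow>
        norm (f x u - f x' u') \<le> L * (norm (x - x') + \<bar>u - u'\<bar>)"
    and L0: "0 \<le> L"
    and fbd: "\<And>x u. x \<in> cball 0 (c0 + m * \<epsilon>0 + 1) \<Longrightarrow> u \<in> {umin - 1..umax + 1} \<Longrightarrow> norm (f x u) \<le> M"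
    and XiLip: "\<And>u u'. u \<in> {umin..umax} \<Longrightarrow> u' \<in> {umin..umax} \<Longrightarrow> norm (\<Xi> u - \<Xi> u') \<le> LX * \<bar>u - u'\<bar>"
    and LX0: "0 \<le> LX"
    and gLip: "\<And>x x'. x \<in> cball 0 (c0 + m * \<epsilon>0 + 1) \<Longrightarrow> x' \<in> cball 0 (c0 + m * \<epsilon>0 + 1) \<Longrightarrow>
        \<bar>g x - g x'\<bar> \<le> Lg * norm (x - x')"
    and Lg0: "0 \<le> Lg"
    and gbd: "\<And>x. x \<in> cball 0 (c0 + m * \<epsilon>0 + 1) \<Longrightarrow> \<bar>g x\<bar> \<le> Mg"
    and gcont: "continuous_on UNIV g"
    and Gmono: "\<And>a b. a \<in> {umin..umax} \<Longrightarrow> b \<in> {umin..umax} \<Longrightarrow> a < b \<Longrightarrow> \<mu> * (b - a) \<le> g (\<Xi> b) - g (\<Xi> a)"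
    and Yb: "\<And>y. y \<in> {g (\<Xi> umin)..g (\<Xi> umax)} \<Longrightarrow> \<bar>y\<bar> \<le> Yb"
    and h0: "0 < h" and h4: "m * exp (- lam * h) \<le> 1/4"
begin

abbreviation "K \<equiv> cball (0::real^'n) (c0 + m * \<epsilon>0 + 1)"
abbreviation "R \<equiv> m * \<epsilon>0 + 1"

lemma inK: "u \<in> {umin..umax} \<Longrightarrow> norm (x - \<Xi> u) \<le> R \<Longrightarrow> x \<in> K"
  using c0[of u] norm_triangle_ineq[of "x - \<Xi> u" "\<Xi> u"] by (auto simp: dist_norm)

lemma frozen:
  assumes u0: "u0 \<in> {umin..umax}" and z0: "norm (z0 - \<Xi> u0) \<le> \<epsilon>0"
  shows "\<exists>z. z t0 = z0 \<and> continuous_on {t0..t0+h} z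
     \<and> (\<forall>t\<in>{t0..t0+h}. ((\<lambda>s. f (z s) u0) has_integral (z t - z0)) {t0..t})
     \<and> (\<forall>t\<in>{t0..t0+h}. norm (z t - \<Xi> u0) \<le> m * exp (- lam * (t - t0)) * norm (z0 - \<Xi> u0))"
proof -
  define c where "c = \<Xi> u0"
  define Bc where "Bc = cball c R"
  define P where "P = closest_point Bc"
  define F where "F y = f (P y) u0" for y
  have mR: "m * \<epsilon>0 < R" by simp
  have e0m: "\<epsilon>0 \<le> m * \<epsilon>0" using m1 eps0 by simp
  have mpos: "0 \<le> R" using e0m eps0 by simp
  have Bc: "closed Bc" "convex Bc" "Bc \<noteq> {}" using mpos unfolding Bc_def
    by auto
  have PB: "P y \<in> Bc" for y unfolding P_def by (rule closest_point_in_set[OF Bc(1) Bc(3)])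
  have BK: "y \<in> K" if "y \<in> Bc" for y
  proof -
    have "norm (y - \<Xi> u0) \<le> R" using that by (simp add: Bc_def c_def dist_norm norm_minus_commute)
    then show ?thesis by (rule inK[OF u0])
  qed
  have PL: "norm (P y - P y') \<le> norm (y - y')" for y y'
    using closest_point_lipschitz[OF Bc(2) Bc(1) Bc(3)] by (simp add: P_def dist_norm)
  have u0U: "u0 \<in> {umin - 1..umax + 1}" using u0 by auto
  have FL: "norm (F y - F y') \<le> L * norm (y - y')" for y y'
  proof -
    have "norm (F y - F y') \<le> L * (norm (P y - P y') + \<bar>u0 - u0\<bar>)"
      unfolding F_def by (rule fLip[OF BK[OF PB] BK[OF PB] u0U u0U])
    also have "\<dots> \<le> L * norm (y - y')" using PL[of y y'] L0 by (simp add: mult_left_mono)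
    finally show ?thesis .
  qed
  have FM: "norm (F y) \<le> M" for y unfolding F_def by (rule fbd[OF BK[OF PB] u0U])
  obtain y where y0: "y t0 = z0" and yc: "continuous_on {t0..t0+h} y"
    and yeq: "\<forall>t\<in>{t0..t0+h}. y t = z0 + integral {t0..t} (\<lambda>s. F (y s))"
    using picard_exists[OF FL L0 FM, of t0 "t0 + h" z0] h0 by auto
  have "L-lipschitz_on UNIV F" using FL L0 by (auto simp: lipschitz_on_def dist_norm)
  then have Fc: "continuous_on UNIV F" by (rule lipschitz_on_continuous_on)
  have Fyc: "continuous_on {t0..t0+h} (\<lambda>s. F (y s))"
    by (rule continuous_on_compose2[OF Fc yc subset_UNIV])
  have yd: "(y has_vector_derivative F (y t)) (at t within {t0..t0+h})" if t: "t \<in> {t0..t0+h}" for t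
  proof (rule has_vector_derivative_transform[OF t])
    show "y x = z0 + integral {t0..x} (\<lambda>s. F (y s))" if "x \<in> {t0..t0+h}" for x using yeq that by auto
    show "((\<lambda>x. z0 + integral {t0..x} (\<lambda>s. F (y s))) has_vector_derivative F (y t)) (at t within {t0..t0+h})"
      using has_vector_derivative_add[OF has_vector_derivative_const integral_has_vector_derivative[OF Fyc t]] by simp
  qed
  define ys where "ys \<tau> = y (\<tau> + t0)" for \<tau>
  have ysd: "(ys has_vector_derivative F (ys \<tau>)) (at \<tau> within {0..h})" if "\<tau> \<in> {0..h}" for \<tau>
  proof -
    have d1: "((\<lambda>\<tau>. \<tau> + t0) has_vector_derivative 1) (at \<tau> within {0..h})"
      using has_vector_derivative_add[OF has_vector_derivative_id has_vector_derivative_const[of t0]] by simp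
    have im: "(\<lambda>\<tau>. \<tau> + t0) ` {0..h} = {t0..t0+h}" by (simp add: add.commute)
    have "(y has_vector_derivative F (y (\<tau> + t0))) (at (\<tau> + t0) within {t0..t0+h})"
      using yd[of "\<tau> + t0"] that by simp
    then have d2: "(y has_vector_derivative F (y (\<tau> + t0))) (at (\<tau> + t0) within (\<lambda>\<tau>. \<tau> + t0) ` {0..h})"
      by (simp only: im)
    have "((y \<circ> (\<lambda>\<tau>. \<tau> + t0)) has_vector_derivative 1 *\<^sub>R F (y (\<tau> + t0))) (at \<tau> within {0..h})"
      by (rule vector_diff_chain_within[OF d1 d2])
    then show ?thesis by (simp add: ys_def[abs_def] o_def)
  qed
  have ys0: "ys 0 = z0" by (simp add: ys_def y0)
  have ysc: "continuous_on {0..h} ys"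
  proof -
    have im: "(\<lambda>\<tau>. \<tau> + t0) ` {0..h} \<subseteq> {t0..t0+h}" by (simp add: add.commute)
    have "continuous_on {0..h} (\<lambda>\<tau>. \<tau> + t0)" by (intro continuous_intros)
    then show ?thesis unfolding ys_def by (rule continuous_on_compose2[OF yc _ im])
  qed
  define \<phi> where "\<phi> \<tau> = norm (ys \<tau> - c)" for \<tau>
  have phic: "continuous_on {0..h} \<phi>" unfolding \<phi>_def by (intro continuous_intros ysc)
  have solve: "\<forall>\<tau>\<in>{0..s}. (ys has_vector_derivative f (ys \<tau>) u0) (at \<tau> within {0..s})"
    if s: "s \<in> {0..h}" and inB: "\<forall>\<sigma>\<in>{0..s}. \<phi> \<sigma> \<le> R" for s
  proof
    fix \<tau> assume \<tau>: "\<tau> \<in> {0..s}"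
    have "ys \<tau> \<in> Bc" using inB \<tau> by (auto simp: \<phi>_def Bc_def dist_norm norm_minus_commute)
    then have "F (ys \<tau>) = f (ys \<tau>) u0" by (simp add: F_def P_def closest_point_self)
    moreover have "(ys has_vector_derivative F (ys \<tau>)) (at \<tau> within {0..s})"
      by (rule has_vector_derivative_within_subset[OF ysd]) (use \<tau> s in auto)
    ultimately show "(ys has_vector_derivative f (ys \<tau>) u0) (at \<tau> within {0..s})" by simp
  qed
  have z0c: "norm (ys 0 - \<Xi> u0) \<le> \<epsilon>0" using z0 ys0 by simp
  have bar: "\<forall>s\<in>{0..h}. \<phi> s < R"
  proof (rule barrier[OF phic])
    show "\<phi> 0 < R" using z0 ys0 e0m by (simp add: \<phi>_def c_def)
    fix s assume s: "s \<in> {0..h}" and inB: "\<forall>\<sigma>\<in>{0..s}. \<phi> \<sigma> \<le> R"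
    have "\<phi> s \<le> m * exp (- lam * s) * norm (ys 0 - \<Xi> u0)"
      unfolding \<phi>_def c_def by (rule A1[OF u0 solve[OF s inB] z0c]) (use s in auto)
    also have "\<dots> \<le> m * 1 * \<epsilon>0"
      using s lam m1 z0c by (intro mult_mono) auto
    finally show "\<phi> s < R" by simp
  qed
  have allB: "\<forall>\<sigma>\<in>{0..h}. \<phi> \<sigma> \<le> R" using bar by (auto intro: less_imp_le)
  have hh: "h \<in> {0..h}" using h0 by auto
  have expb: "norm (ys \<tau> - \<Xi> u0) \<le> m * exp (- lam * \<tau>) * norm (ys 0 - \<Xi> u0)" if "\<tau> \<in> {0..h}" for \<tau>
    by (rule A1[OF u0 solve[OF hh allB] z0c that])
  have yB: "y s \<in> Bc" if "s \<in> {t0..t0+h}" for s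
  proof -
    have "\<phi> (s - t0) \<le> R" using allB that by auto
    then show ?thesis using that by (auto simp: \<phi>_def ys_def Bc_def dist_norm norm_minus_commute)
  qed
  show ?thesis
  proof (intro exI conjI ballI)
    show "y t0 = z0" by (rule y0)
    show "continuous_on {t0..t0+h} y" by (rule yc)
    fix t assume t: "t \<in> {t0..t0+h}"
    have sub: "{t0..t} \<subseteq> {t0..t0+h}" using t by auto
    have "((\<lambda>s. F (y s)) has_integral integral {t0..t} (\<lambda>s. F (y s))) {t0..t}"
      by (rule integrable_integral, rule integrable_continuous_real, rule continuous_on_subset[OF Fyc sub])
    moreover have "integral {t0..t} (\<lambda>s. F (y s)) = y t - z0" using yeq t by auto
    moreover have "F (y s) = f (y s) u0" if "s \<in> {t0..t}" for s
      using yB[of s] that sub by (auto simp: F_def P_def closest_point_self)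
    ultimately show "((\<lambda>s. f (y s) u0) has_integral (y t - z0)) {t0..t}"
      using has_integral_cong[of "{t0..t}" "\<lambda>s. F (y s)" "\<lambda>s. f (y s) u0"] by auto
    show "norm (y t - \<Xi> u0) \<le> m * exp (- lam * (t - t0)) * norm (z0 - \<Xi> u0)"
      using expb[of "t - t0"] t ys0 by (auto simp: ys_def)
  qed
qed

end


lemma sat_abs: "\<bar>sat_int umin umax u w\<bar> \<le> \<bar>w\<bar>"
  by (auto simp: sat_int_def)

lemma sat_le: "umin < u \<Longrightarrow> sat_int umin umax u w \<le> w"
  by (auto simp: sat_int_def)

lemma sat_ge: "u < umax \<Longrightarrow> w \<le> sat_int umin umax u w"
  by (auto simp: sat_int_def)

locale loop = plant +
  fixes k :: real and r :: "real \<Rightarrow> real" and x :: "real \<Rightarrow> real^'n" and uI :: "real \<Rightarrow> real"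
    and W0 D1 D :: real
  assumes sol: "closed_loop_solution f g umin umax \<tau>p k r x uI"
    and k0: "0 < k"
    and rY: "\<And>t. 0 \<le> t \<Longrightarrow> r t \<in> {g (\<Xi> umin)..g (\<Xi> umax)}"
    and uI0: "uI 0 \<in> {umin..umax}"
    and e0: "norm (x 0 - \<Xi> (uI 0)) \<le> \<epsilon>0"
    and W0_def: "W0 = Yb + Mg"
    and D1_def: "D1 = L * (h + \<tau>p) * h * exp (L * h)"
    and D_def: "D = D1 + LX * h"
    and s1: "k * W0 * D \<le> 1/2" and s1': "k * W0 * D \<le> 3/4 * \<epsilon>0"
    and s2: "k * \<tau>p * W0 \<le> 1"
begin

abbreviation "pin s \<equiv> uI s + \<tau>p * k * (r s - g (x s))"

lemma xint: "\<forall>t\<ge>0. ((\<lambda>s. f (x s) (pin s)) has_integral (x t - x 0)) {0..t}"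
  using sol unfolding closed_loop_solution_def by blast

lemma uint: "\<forall>t\<ge>0. ((\<lambda>s. sat_int umin umax (uI s) (k * (r s - g (x s)))) has_integral (uI t - uI 0)) {0..t}"
  using sol unfolding closed_loop_solution_def by blast

lemma xcont: "0 \<le> a \<Longrightarrow> continuous_on {a..b} x"
proof -
  assume a: "0 \<le> a"
  show ?thesis
  proof (cases "a \<le> b")
    case True
    then have "continuous_on {0..b} x" using cont_from_integral[OF xint] a by auto
    then show ?thesis by (rule continuous_on_subset) (use a in auto)
  next
    case False then show ?thesis by simp
  qed
qed

lemma ucont: "0 \<le> a \<Longrightarrow> continuous_on {a..b} uI"
proof -
  assume a: "0 \<le> a"
  show ?thesis
  proof (cases "a \<le> b")
    case True
    then have "continuous_on {0..b} uI" using cont_from_integral[OF uint] a by auto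
    then show ?thesis by (rule continuous_on_subset) (use a in auto)
  next
    case False then show ?thesis by simp
  qed
qed

lemma uI_upper: "0 \<le> t \<Longrightarrow> uI t \<le> umax"
proof (rule ccontr)
  assume t: "0 \<le> t" and "\<not> uI t \<le> umax"
  then have gt: "umax < uI t" by simp
  obtain s where s: "s \<in> {0..<t}" "uI s = umax" "\<forall>\<sigma>\<in>{s<..t}. umax < uI \<sigma>"
    using last_crossing[OF ucont[of 0 t] _ gt t] uI0 by auto
  have I: "((\<lambda>s. sat_int umin umax (uI s) (k * (r s - g (x s)))) has_integral (uI t - uI s)) {s..t}"
    by (rule integral_sub[OF uint]) (use s in auto)
  have "uI t - uI s \<le> 0"
  proof (rule has_integral_le[OF I has_integral_0])
    fix \<sigma> assume \<sigma>: "\<sigma> \<in> {s..t}"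
    have "umax \<le> uI \<sigma>"
    proof (cases "\<sigma> = s")
      case True then show ?thesis using s(2) by simp
    next
      case False then have "\<sigma> \<in> {s<..t}" using \<sigma> by auto
      then show ?thesis using s(3) by fastforce
    qed
    then show "sat_int umin umax (uI \<sigma>) (k * (r \<sigma> - g (x \<sigma>))) \<le> 0"
      using umin_less by (auto simp: sat_int_def)
  qed
  then show False using s gt by simp
qed

lemma uI_lower: "0 \<le> t \<Longrightarrow> umin \<le> uI t"
proof (rule ccontr)
  assume t: "0 \<le> t" and "\<not> umin \<le> uI t"
  then have gt: "- umin < - uI t" by simp
  have c: "continuous_on {0..t} (\<lambda>s. - uI s)" using ucont[of 0 t] by (intro continuous_intros) auto
  obtain s where s: "s \<in> {0..<t}" "- uI s = - umin" "\<forall>\<sigma>\<in>{s<..t}. - umin < - uI \<sigma>"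
    using last_crossing[OF c _ gt t] uI0 by auto
  have I: "((\<lambda>s. sat_int umin umax (uI s) (k * (r s - g (x s)))) has_integral (uI t - uI s)) {s..t}"
    by (rule integral_sub[OF uint]) (use s in auto)
  have "0 \<le> uI t - uI s"
  proof (rule has_integral_le[OF has_integral_0 I])
    fix \<sigma> assume \<sigma>: "\<sigma> \<in> {s..t}"
    have "uI \<sigma> \<le> umin"
    proof (cases "\<sigma> = s")
      case True then show ?thesis using s(2) by simp
    next
      case False then have "\<sigma> \<in> {s<..t}" using \<sigma> by auto
      then show ?thesis using s(3) by fastforce
    qed
    then show "0 \<le> sat_int umin umax (uI \<sigma>) (k * (r \<sigma> - g (x \<sigma>)))"
      by (auto simp: sat_int_def)
  qed
  then show False using s gt by simp
qed

lemma uI_in: "0 \<le> t \<Longrightarrow> uI t \<in> {umin..umax}"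
  using uI_upper uI_lower by auto

lemma uI_lip:
  assumes ab: "0 \<le> a" "a \<le> b" and W: "0 \<le> W" and rW: "\<forall>s\<in>{a..b}. \<bar>r s - g (x s)\<bar> \<le> W"
  shows "\<bar>uI b - uI a\<bar> \<le> k * W * (b - a)"
proof -
  have I: "((\<lambda>s. sat_int umin umax (uI s) (k * (r s - g (x s)))) has_integral (uI b - uI a)) {a..b}"
    by (rule integral_sub[OF uint ab])
  have kW: "0 \<le> k * W" using k0 W by simp
  have B: "norm (sat_int umin umax (uI s) (k * (r s - g (x s)))) \<le> k * W" if "s \<in> {a..b} - {}" for s
  proof -
    have "\<bar>r s - g (x s)\<bar> \<le> W" using rW that by auto
    then have "\<bar>k * (r s - g (x s))\<bar> \<le> k * W" using k0 by (simp add: abs_mult)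
    then show ?thesis using sat_abs[of umin umax "uI s" "k * (r s - g (x s))"] by simp
  qed
  have "norm (uI b - uI a) \<le> k * W * (b - a)"
    using has_integral_bound_real[OF kW finite.emptyI I B] ab by simp
  then show ?thesis using ab by simp
qed

end


context loop begin

lemma window:
  assumes t0: "0 \<le> t0" and et0: "norm (x t0 - \<Xi> (uI t0)) \<le> \<epsilon>0" and W: "0 \<le> W" "W \<le> W0"
    and rW: "\<forall>t\<in>{t0..t0+h}. x t \<in> K \<longrightarrow> \<bar>r t - g (x t)\<bar> \<le> W"
  shows "\<forall>t\<in>{t0..t0+h}. x t \<in> K \<and> norm (x t - \<Xi> (uI t)) \<le> m * norm (x t0 - \<Xi> (uI t0)) + k * W * D"
    and "norm (x (t0+h) - \<Xi> (uI (t0+h))) \<le> norm (x t0 - \<Xi> (uI t0)) / 4 + k * W * D"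
proof -
  define u0 where "u0 = uI t0"
  define A where "A = norm (x t0 - \<Xi> u0)"
  have u0: "u0 \<in> {umin..umax}" using uI_in[OF t0] by (simp add: u0_def)
  have A: "A \<le> \<epsilon>0" using et0 by (simp add: A_def u0_def)
  obtain z where z0: "z t0 = x t0" and zc: "continuous_on {t0..t0+h} z"
    and zint: "\<forall>t\<in>{t0..t0+h}. ((\<lambda>s. f (z s) u0) has_integral (z t - x t0)) {t0..t}"
    and zexp: "\<forall>t\<in>{t0..t0+h}. norm (z t - \<Xi> u0) \<le> m * exp (- lam * (t - t0)) * A"
    using frozen[OF u0 A[unfolded A_def], of t0] unfolding A_def by blast
  have hpos: "0 \<le> h" using h0 by simp
  have mA: "m * A \<le> m * \<epsilon>0" using A m1 by (simp add: mult_left_mono)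
  have A0: "0 \<le> A" by (simp add: A_def)
  have zb: "norm (z t - \<Xi> u0) \<le> m * A" if "t \<in> {t0..t0+h}" for t
  proof -
    have "m * exp (- lam * (t - t0)) * A \<le> m * 1 * A"
      using that lam m1 A0 by (intro mult_mono) auto
    then show ?thesis using zexp that by fastforce
  qed
  have zK: "z t \<in> K" if "t \<in> {t0..t0+h}" for t
    using inK[OF u0, of "z t"] zb[OF that] mA by simp
  have xc: "continuous_on {t0..t0+h} x" by (rule xcont[OF t0])
  define d where "d t = x t - z t" for t
  have dc: "continuous_on {t0..t0+h} (\<lambda>t. norm (d t))" unfolding d_def
    by (intro continuous_intros xc zc)
  have xint': "((\<lambda>s. f (x s) (pin s)) has_integral (x t - x t0)) {t0..t}" if "t \<in> {t0..t0+h}" for t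
    by (rule integral_sub[OF xint t0]) (use that in auto)
  have D1pos: "0 \<le> D1" unfolding D1_def using L0 h0 taup by simp
  have DD1: "D1 \<le> D" unfolding D_def using LX0 h0 by simp
  have kW: "0 \<le> k * W" using k0 W by simp
  have kWD1: "k * W * D1 \<le> 1/2"
  proof -
    have "k * W * D1 \<le> k * W0 * D" using k0 W D1pos DD1 by (intro mult_mono) auto
    then show ?thesis using s1 by simp
  qed
  have G: "\<forall>\<tau>\<in>{t0..t}. norm (d \<tau>) \<le> k * W * D1"
    if t: "t \<in> {t0..t0+h}" and inT: "\<forall>\<sigma>\<in>{t0..t}. norm (x \<sigma> - \<Xi> u0) \<le> R" for t
  proof
    fix \<tau> assume \<tau>: "\<tau> \<in> {t0..t}"
    have sub: "{t0..t} \<subseteq> {t0..t0+h}" using t by auto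
    have xK: "x \<sigma> \<in> K" if "\<sigma> \<in> {t0..t}" for \<sigma> using inK[OF u0] inT that by blast
    have rW': "\<bar>r \<sigma> - g (x \<sigma>)\<bar> \<le> W" if "\<sigma> \<in> {t0..t}" for \<sigma> using rW xK[OF that] that sub by blast
    have pb: "\<bar>pin \<sigma> - u0\<bar> \<le> k * W * (h + \<tau>p)" and pU: "pin \<sigma> \<in> {umin - 1..umax + 1}"
      if \<sigma>: "\<sigma> \<in> {t0..t}" for \<sigma>
    proof -
      have "\<bar>uI \<sigma> - uI t0\<bar> \<le> k * W * (\<sigma> - t0)"
        by (rule uI_lip[OF t0 _ W(1)]) (use \<sigma> rW' in auto)
      also have "\<dots> \<le> k * W * h" using \<sigma> t kW by (intro mult_left_mono) auto
      finally have a: "\<bar>uI \<sigma> - u0\<bar> \<le> k * W * h" by (simp add: u0_def)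
      have "\<bar>\<tau>p * k * (r \<sigma> - g (x \<sigma>))\<bar> \<le> \<tau>p * k * W"
        using rW'[OF \<sigma>] taup k0 by (simp add: abs_mult mult_left_mono)
      moreover have "\<tau>p * k * W \<le> 1"
      proof -
        have "\<tau>p * k * W \<le> \<tau>p * k * W0" using W taup k0 by (intro mult_left_mono) auto
        then show ?thesis using s2 by (simp add: mult_ac)
      qed
      moreover have "uI \<sigma> \<in> {umin..umax}" using uI_in[of \<sigma>] \<sigma> t0 by auto
      ultimately show "pin \<sigma> \<in> {umin - 1..umax + 1}" by auto
      show "\<bar>pin \<sigma> - u0\<bar> \<le> k * W * (h + \<tau>p)"
        using a \<open>\<bar>\<tau>p * k * (r \<sigma> - g (x \<sigma>))\<bar> \<le> \<tau>p * k * W\<close> by (simp add: algebra_simps)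
    qed
    have u0U: "u0 \<in> {umin - 1..umax + 1}" using u0 by auto
    have fb: "norm (f (x \<sigma>) (pin \<sigma>) - f (z \<sigma>) u0) \<le> L * norm (d \<sigma>) + L * (k * W * (h + \<tau>p))"
      if \<sigma>: "\<sigma> \<in> {t0..t}" for \<sigma>
    proof -
      have "norm (f (x \<sigma>) (pin \<sigma>) - f (z \<sigma>) u0) \<le> L * (norm (x \<sigma> - z \<sigma>) + \<bar>pin \<sigma> - u0\<bar>)"
        by (rule fLip[OF xK[OF \<sigma>] zK pU[OF \<sigma>] u0U]) (use \<sigma> sub in auto)
      also have "\<dots> \<le> L * (norm (d \<sigma>) + k * W * (h + \<tau>p))"
        using pb[OF \<sigma>] L0 by (intro mult_left_mono) (auto simp: d_def)
      finally show ?thesis by (simp add: algebra_simps)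
    qed
    define c where "c = L * (k * W * (h + \<tau>p)) * h"
    have c0: "0 \<le> c" unfolding c_def using L0 kW h0 taup by simp
    have dcT: "continuous_on {t0..t} (\<lambda>t. norm (d t))" using continuous_on_subset[OF dc sub] .
    have ineq: "norm (d s) \<le> c + L * integral {t0..s} (\<lambda>t. norm (d t))" if s: "s \<in> {t0..t}" for s
    proof -
      have sub2: "{t0..s} \<subseteq> {t0..t}" using s by auto
      have I: "((\<lambda>\<sigma>. f (x \<sigma>) (pin \<sigma>) - f (z \<sigma>) u0) has_integral d s) {t0..s}"
        using has_integral_diff[OF xint'[of s] zint[rule_format, of s]] s sub
        by (auto simp: d_def z0)
      have intn: "(\<lambda>t. norm (d t)) integrable_on {t0..s}"
        by (rule integrable_continuous_real, rule continuous_on_subset[OF dcT sub2])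
      have "norm (integral {t0..s} (\<lambda>\<sigma>. f (x \<sigma>) (pin \<sigma>) - f (z \<sigma>) u0))
            \<le> integral {t0..s} (\<lambda>\<sigma>. L * norm (d \<sigma>) + L * (k * W * (h + \<tau>p)))"
      proof (rule integral_norm_bound_integral)
        show "(\<lambda>\<sigma>. f (x \<sigma>) (pin \<sigma>) - f (z \<sigma>) u0) integrable_on {t0..s}"
          by (rule has_integral_integrable[OF I])
        show "(\<lambda>\<sigma>. L * norm (d \<sigma>) + L * (k * W * (h + \<tau>p))) integrable_on {t0..s}"
          by (rule integrable_continuous_real,
              rule continuous_on_add[OF continuous_on_mult[OF continuous_on_const continuous_on_subset[OF dcT sub2]] continuous_on_const])
        fix \<sigma> assume "\<sigma> \<in> {t0..s}"
        then show "norm (f (x \<sigma>) (pin \<sigma>) - f (z \<sigma>) u0) \<le> L * norm (d \<sigma>) + L * (k * W * (h + \<tau>p))"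
          using fb sub2 by auto
      qed
      then have "norm (d s) \<le> integral {t0..s} (\<lambda>\<sigma>. L * norm (d \<sigma>) + L * (k * W * (h + \<tau>p)))"
        using integral_unique[OF I] by simp
      also have "\<dots> = L * integral {t0..s} (\<lambda>t. norm (d t)) + L * (k * W * (h + \<tau>p)) * (s - t0)"
      proof -
        have i1: "(\<lambda>\<sigma>. L * norm (d \<sigma>)) integrable_on {t0..s}"
          using integrable_cmul[OF intn, of L] by simp
        have "integral {t0..s} (\<lambda>\<sigma>. L * norm (d \<sigma>) + L * (k * W * (h + \<tau>p)))
            = integral {t0..s} (\<lambda>\<sigma>. L * norm (d \<sigma>)) + integral {t0..s} (\<lambda>\<sigma>. L * (k * W * (h + \<tau>p)))"
          by (rule integral_add[OF i1 integrable_const_ivl])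
        also have "integral {t0..s} (\<lambda>\<sigma>. L * norm (d \<sigma>)) = L * integral {t0..s} (\<lambda>t. norm (d t))"
          using integral_mult[OF intn, of L] by simp
        also have "integral {t0..s} (\<lambda>\<sigma>. L * (k * W * (h + \<tau>p))) = L * (k * W * (h + \<tau>p)) * (s - t0)"
          using s by simp
        finally show ?thesis .
      qed
      also have "L * (k * W * (h + \<tau>p)) * (s - t0) \<le> c"
        unfolding c_def using s t L0 kW taup by (intro mult_left_mono) auto
      finally show ?thesis by simp
    qed
    have "norm (d \<tau>) \<le> c * exp (L * (\<tau> - t0))"
      by (rule gronwall[OF dcT L0 ineq \<tau>])
    also have "\<dots> \<le> c * exp (L * h)" using c0 \<tau> t L0 by (intro mult_left_mono) (auto intro: mult_left_mono)
    also have "\<dots> = k * W * D1" by (simp add: c_def D1_def mult_ac)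
    finally show "norm (d \<tau>) \<le> k * W * D1" .
  qed
  define \<phi> where "\<phi> t = norm (x t - \<Xi> u0)" for t
  have phic: "continuous_on {t0..t0+h} \<phi>" unfolding \<phi>_def by (intro continuous_intros xc)
  have bar: "\<forall>s\<in>{t0..t0+h}. \<phi> s < R"
  proof (rule barrier[OF phic])
    have "\<epsilon>0 \<le> m * \<epsilon>0" using m1 eps0 by simp
    then show "\<phi> t0 < R" using A by (simp add: \<phi>_def A_def)
    fix s assume s: "s \<in> {t0..t0+h}" and inT: "\<forall>\<sigma>\<in>{t0..s}. \<phi> \<sigma> \<le> R"
    have "norm (d s) \<le> k * W * D1" using G[OF s] inT s by (auto simp: \<phi>_def)
    moreover have "\<phi> s \<le> norm (z s - \<Xi> u0) + norm (d s)"
      unfolding \<phi>_def d_def using norm_triangle_ineq[of "z s - \<Xi> u0" "x s - z s"] by simp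
    ultimately show "\<phi> s < R" using zb[OF s] mA kWD1 by simp
  qed
  have hh: "t0 + h \<in> {t0..t0+h}" using h0 by simp
  have dG: "norm (d \<tau>) \<le> k * W * D1" if "\<tau> \<in> {t0..t0+h}" for \<tau>
  proof -
    have "\<forall>\<sigma>\<in>{t0..t0+h}. norm (x \<sigma> - \<Xi> u0) \<le> R" using bar by (auto simp: \<phi>_def intro: less_imp_le)
    then show ?thesis using G[OF hh] that by blast
  qed
  have xK: "x t \<in> K" if "t \<in> {t0..t0+h}" for t
  proof -
    have "norm (x t - \<Xi> u0) \<le> R" using bar that by (auto simp: \<phi>_def intro: less_imp_le)
    then show ?thesis by (rule inK[OF u0])
  qed
  have main: "norm (x t - \<Xi> (uI t)) \<le> m * exp (- lam * (t - t0)) * A + k * W * D" if t: "t \<in> {t0..t0+h}" for t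
  proof -
    have rW': "\<bar>r \<sigma> - g (x \<sigma>)\<bar> \<le> W" if "\<sigma> \<in> {t0..t}" for \<sigma> using rW xK that t by auto
    have "\<bar>uI t - uI t0\<bar> \<le> k * W * (t - t0)"
      by (rule uI_lip[OF t0 _ W(1)]) (use t rW' in auto)
    also have "\<dots> \<le> k * W * h" using t kW by (intro mult_left_mono) auto
    finally have a: "\<bar>uI t - u0\<bar> \<le> k * W * h" by (simp add: u0_def)
    have "norm (\<Xi> u0 - \<Xi> (uI t)) \<le> LX * \<bar>u0 - uI t\<bar>"
      by (rule XiLip[OF u0 uI_in]) (use t t0 in auto)
    also have "\<dots> \<le> LX * (k * W * h)" using a LX0 by (intro mult_left_mono) (auto simp: abs_minus_commute)
    finally have b: "norm (\<Xi> u0 - \<Xi> (uI t)) \<le> LX * (k * W * h)" .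
    have eq: "x t - \<Xi> (uI t) = (z t - \<Xi> u0) + d t + (\<Xi> u0 - \<Xi> (uI t))" by (simp add: d_def)
    have "norm (x t - \<Xi> (uI t)) = norm ((z t - \<Xi> u0) + d t + (\<Xi> u0 - \<Xi> (uI t)))" by (simp only: eq)
    then have "norm (x t - \<Xi> (uI t)) \<le> norm (z t - \<Xi> u0) + norm (d t) + norm (\<Xi> u0 - \<Xi> (uI t))"
      using norm_triangle_ineq[of "(z t - \<Xi> u0) + d t" "\<Xi> u0 - \<Xi> (uI t)"] norm_triangle_ineq[of "z t - \<Xi> u0" "d t"]
      by linarith
    also have "\<dots> \<le> m * exp (- lam * (t - t0)) * A + k * W * D1 + LX * (k * W * h)"
      using zexp t dG[OF t] b by (intro add_mono) auto
    also have "\<dots> = m * exp (- lam * (t - t0)) * A + k * W * D" by (simp add: D_def algebra_simps)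
    finally show ?thesis .
  qed
  show "\<forall>t\<in>{t0..t0+h}. x t \<in> K \<and> norm (x t - \<Xi> (uI t)) \<le> m * norm (x t0 - \<Xi> (uI t0)) + k * W * D"
  proof
    fix t assume t: "t \<in> {t0..t0+h}"
    have "m * exp (- lam * (t - t0)) * A \<le> m * 1 * A"
      using t lam m1 A0 by (intro mult_mono) auto
    then show "x t \<in> K \<and> norm (x t - \<Xi> (uI t)) \<le> m * norm (x t0 - \<Xi> (uI t0)) + k * W * D"
      using main[OF t] xK[OF t] by (simp add: A_def u0_def)
  qed
  have "m * exp (- lam * (t0 + h - t0)) * A \<le> 1/4 * A" using h4 A0 by (intro mult_right_mono) auto
  then show "norm (x (t0+h) - \<Xi> (uI (t0+h))) \<le> norm (x t0 - \<Xi> (uI t0)) / 4 + k * W * D"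
    using main[OF hh] by (simp add: A_def u0_def)
qed

end


lemma floor_window:
  fixes t h :: real assumes "0 \<le> t" "0 < h"
  shows "\<exists>n::nat. real n * h \<le> t \<and> t \<le> real n * h + h"
proof -
  define n where "n = nat \<lfloor>t / h\<rfloor>"
  have "0 \<le> t / h" using assms by simp
  then have rn: "real n = of_int \<lfloor>t / h\<rfloor>" by (simp add: n_def)
  have "real n \<le> t / h" using rn by linarith
  then have a: "real n * h \<le> t" using assms by (simp add: pos_le_divide_eq)
  have "t / h < real n + 1" using rn by linarith
  then have "t < (real n + 1) * h" using assms by (simp add: pos_divide_less_eq)
  then show ?thesis using a by (intro exI[of _ n]) (simp add: algebra_simps)
qed

context loop begin

lemma Yb0: "0 \<le> Yb"
proof -
  have "0 \<le> \<mu> * (umax - umin)" using mu umin_less by simp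
  moreover have "\<mu> * (umax - umin) \<le> g (\<Xi> umax) - g (\<Xi> umin)"
    using Gmono[of umin umax] umin_less by auto
  ultimately have "g (\<Xi> umin) \<le> g (\<Xi> umax)" by linarith
  then show ?thesis using Yb[of "g (\<Xi> umin)"] by auto
qed

lemma Mg0: "0 \<le> Mg"
proof -
  have "norm (\<Xi> umin) \<le> c0" using c0[of umin] umin_less by auto
  then have "0 \<le> c0" using norm_ge_zero[of "\<Xi> umin"] by linarith
  moreover have "0 \<le> m * \<epsilon>0" using eps0 m1 by simp
  ultimately have "\<bar>g 0\<bar> \<le> Mg" using gbd[of 0] by simp
  then show ?thesis by linarith
qed

lemma W00: "0 \<le> W0" using Yb0 Mg0 by (simp add: W0_def)

lemma rW0: "0 \<le> t \<Longrightarrow> x t \<in> K \<Longrightarrow> \<bar>r t - g (x t)\<bar> \<le> W0"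
  using Yb[OF rY[of t]] gbd[of "x t"] by (simp add: W0_def abs_diff_le_iff abs_le_iff)

lemma rwin: "0 \<le> t0 \<Longrightarrow> \<forall>t\<in>{t0..t0+h}. x t \<in> K \<longrightarrow> \<bar>r t - g (x t)\<bar> \<le> W0"
proof (intro ballI impI)
  fix t assume "0 \<le> t0" "t \<in> {t0..t0+h}" "x t \<in> K"
  then show "\<bar>r t - g (x t)\<bar> \<le> W0" by (intro rW0) auto
qed

lemma invariant: "norm (x (real n * h) - \<Xi> (uI (real n * h))) \<le> \<epsilon>0"
proof (induction n)
  case 0 then show ?case using e0 by simp
next
  case (Suc n)
  have t0: "0 \<le> real n * h" using h0 by simp
  have "norm (x (real n * h + h) - \<Xi> (uI (real n * h + h))) \<le> norm (x (real n * h) - \<Xi> (uI (real n * h))) / 4 + k * W0 * D"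
    by (rule window(2)[OF t0 Suc.IH W00 order_refl rwin[OF t0]])
  also have "\<dots> \<le> \<epsilon>0" using Suc.IH s1' by simp
  finally show ?case by (simp add: algebra_simps)
qed

lemma allK: "0 \<le> t \<Longrightarrow> x t \<in> K"
proof -
  assume t: "0 \<le> t"
  obtain n :: nat where n: "real n * h \<le> t" "t \<le> real n * h + h" using floor_window[OF t h0] by blast
  have t0: "0 \<le> real n * h" using h0 by simp
  note window(1)[OF t0 invariant W00 order_refl rwin[OF t0]]
  then show ?thesis using n by auto
qed

end


context loop begin

lemma vstep:
  assumes t0: "0 \<le> t0" and rf: "\<forall>t\<in>{t0..t0+h}. r t = rf"
    and ur: "ur \<in> {umin..umax}" "g (\<Xi> ur) = rf"
    and W: "0 \<le> W" "\<forall>t\<in>{t0..t0+h}. \<bar>rf - g (x t)\<bar> \<le> W"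
    and E: "\<forall>t\<in>{t0..t0+h}. norm (x t - \<Xi> (uI t)) \<le> E"
  shows "\<bar>uI (t0+h) - ur\<bar> \<le> max ((1 - k*\<mu>*h) * \<bar>uI t0 - ur\<bar> + k^2*\<mu>*h^2*W + k*h*Lg*E) (k*h*W)"
proof -
  let ?S = "\<lambda>s. sat_int umin umax (uI s) (k * (r s - g (x s)))"
  have hpos: "0 \<le> h" using h0 by simp
  have win: "t0 \<le> t0 + h" using h0 by simp
  have rW: "\<forall>s\<in>{a..b}. \<bar>r s - g (x s)\<bar> \<le> W" if "{a..b} \<subseteq> {t0..t0+h}" for a b
    using W(2) rf that by auto
  have ulip: "\<bar>uI b - uI a\<bar> \<le> k * W * h" if "a \<in> {t0..t0+h}" "b \<in> {t0..t0+h}" "a \<le> b" for a b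
  proof -
    have "\<bar>uI b - uI a\<bar> \<le> k * W * (b - a)"
      by (rule uI_lip[OF _ that(3) W(1) rW]) (use that t0 in auto)
    also have "\<dots> \<le> k * W * h" using that k0 W(1) by (intro mult_left_mono) auto
    finally show ?thesis .
  qed
  have xK: "x s \<in> K" if "s \<in> {t0..t0+h}" for s using allK that t0 by auto
  have uIs: "uI s \<in> {umin..umax}" if "s \<in> {t0..t0+h}" for s using uI_in that t0 by auto
  have XK: "\<Xi> (uI s) \<in> K" if "s \<in> {t0..t0+h}" for s
    using inK[OF uIs[OF that], of "\<Xi> (uI s)"] eps0 m1 by simp
  have gd: "\<bar>g (\<Xi> (uI s)) - g (x s)\<bar> \<le> Lg * E" if s: "s \<in> {t0..t0+h}" for s
  proof -
    have "\<bar>g (\<Xi> (uI s)) - g (x s)\<bar> \<le> Lg * norm (\<Xi> (uI s) - x s)" by (rule gLip[OF XK[OF s] xK[OF s]])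
    also have "\<dots> \<le> Lg * E" using E s Lg0 by (intro mult_left_mono) (auto simp: norm_minus_commute)
    finally show ?thesis .
  qed
  have I: "(?S has_integral (uI (t0+h) - uI t0)) {t0..t0+h}"
    by (rule integral_sub[OF uint t0 win])
  have k2: "k^2 * \<mu> * h^2 * W = k * (\<mu> * (k * W * h)) * h" by (simp add: power2_eq_square)
  consider (pos) "\<forall>s\<in>{t0..t0+h}. ur < uI s" | (neg) "\<forall>s\<in>{t0..t0+h}. uI s < ur"
    | (mixed) s1 s2 where "s1 \<in> {t0..t0+h}" "s2 \<in> {t0..t0+h}" "uI s1 \<le> ur" "ur \<le> uI s2"
    by (meson not_le)
  then show ?thesis
  proof cases
    case pos
    define Cc where "Cc = k * (- \<mu> * ((uI t0 - ur) - k * W * h) + Lg * E)"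
    have Sb: "?S s \<le> Cc" if s: "s \<in> {t0..t0+h}" for s
    proof -
      have "umin < uI s" using pos s ur(1) by force
      then have a1: "?S s \<le> k * (r s - g (x s))" by (rule sat_le)
      have "r s - g (x s) = (g (\<Xi> ur) - g (\<Xi> (uI s))) + (g (\<Xi> (uI s)) - g (x s))"
        using rf s ur(2) by simp
      also have "\<dots> \<le> - \<mu> * (uI s - ur) + Lg * E"
        using Gmono[OF ur(1) uIs[OF s]] pos s gd[OF s] by force
      also have "\<dots> \<le> - \<mu> * ((uI t0 - ur) - k * W * h) + Lg * E"
      proof -
        have "uI t0 - uI s \<le> k * W * h" using ulip[of t0 s] s win by auto
        then have "\<mu> * (uI t0 - uI s) \<le> \<mu> * (k * W * h)" using mu by (intro mult_left_mono) auto
        then show ?thesis by (simp add: algebra_simps)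
      qed
      finally have "k * (r s - g (x s)) \<le> Cc" using k0 unfolding Cc_def by (simp add: mult_left_mono)
      then show ?thesis using a1 by linarith
    qed
    have ci: "((\<lambda>s. Cc) has_integral h * Cc) {t0..t0+h}"
      using has_integral_const_real[of Cc t0 "t0+h"] win by simp
    have up: "uI (t0+h) - uI t0 \<le> h * Cc"
      by (rule has_integral_le[OF I ci]) (use Sb in auto)
    have p0: "0 < uI (t0+h) - ur" "0 < uI t0 - ur" using pos win by auto
    have "\<bar>uI (t0+h) - ur\<bar> \<le> (uI t0 - ur) + h * Cc" using up p0 by simp
    also have "\<dots> = (1 - k*\<mu>*h) * \<bar>uI t0 - ur\<bar> + k^2*\<mu>*h^2*W + k*h*Lg*E"
      using p0 unfolding Cc_def k2 by (simp add: algebra_simps)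
    finally show ?thesis by simp
  next
    case neg
    define Cc where "Cc = k * (\<mu> * ((ur - uI t0) - k * W * h) - Lg * E)"
    have Sb: "Cc \<le> ?S s" if s: "s \<in> {t0..t0+h}" for s
    proof -
      have "- \<mu> * ((ur - uI t0) - k * W * h) + Lg * E \<ge> - \<mu> * (ur - uI s) + Lg * E"
      proof -
        have "uI s - uI t0 \<le> k * W * h" using ulip[of t0 s] s win by auto
        then have "\<mu> * (uI s - uI t0) \<le> \<mu> * (k * W * h)" using mu by (intro mult_left_mono) auto
        then show ?thesis by (simp add: algebra_simps)
      qed
      moreover have "- \<mu> * (ur - uI s) + Lg * E \<ge> (g (\<Xi> (uI s)) - g (\<Xi> ur)) + (g (x s) - g (\<Xi> (uI s)))"
        using Gmono[OF uIs[OF s] ur(1)] neg s gd[OF s] by force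
      moreover have "(g (\<Xi> (uI s)) - g (\<Xi> ur)) + (g (x s) - g (\<Xi> (uI s))) = - (r s - g (x s))"
        using rf s ur(2) by simp
      ultimately have "\<mu> * ((ur - uI t0) - k * W * h) - Lg * E \<le> r s - g (x s)" by linarith
      then have "Cc \<le> k * (r s - g (x s))" using k0 unfolding Cc_def by (simp add: mult_left_mono)
      also have "uI s < umax" using neg s ur(1) by force
      then have "k * (r s - g (x s)) \<le> ?S s" by (rule sat_ge)
      finally show ?thesis .
    qed
    have ci: "((\<lambda>s. Cc) has_integral h * Cc) {t0..t0+h}"
      using has_integral_const_real[of Cc t0 "t0+h"] win by simp
    have up: "h * Cc \<le> uI (t0+h) - uI t0"
      by (rule has_integral_le[OF ci I]) (use Sb in auto)
    have p0: "uI (t0+h) - ur < 0" "uI t0 - ur < 0" using neg win by auto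
    have "\<bar>uI (t0+h) - ur\<bar> \<le> (ur - uI t0) - h * Cc" using up p0 by simp
    also have "\<dots> = (1 - k*\<mu>*h) * \<bar>uI t0 - ur\<bar> + k^2*\<mu>*h^2*W + k*h*Lg*E"
      using p0 unfolding Cc_def k2 by (simp add: algebra_simps)
    finally show ?thesis by simp
  next
    case mixed
    have uc: "continuous_on {a..b} uI" if "t0 \<le> a" for a b using ucont that t0 by auto
    obtain s where s: "s \<in> {t0..t0+h}" "uI s = ur"
    proof (cases "s1 \<le> s2")
      case True
      then obtain s where "s1 \<le> s" "s \<le> s2" "uI s = ur"
        using IVT'[of uI s1 ur s2] mixed uc[of s1 s2] by auto
      then show ?thesis using that[of s] mixed by auto
    next
      case False
      then obtain s where "s2 \<le> s" "s \<le> s1" "uI s = ur"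
        using IVT2'[of uI s1 ur s2] mixed uc[of s2 s1] by auto
      then show ?thesis using that[of s] mixed by auto
    qed
    have "\<bar>uI (t0+h) - ur\<bar> \<le> k * W * h" using ulip[of s "t0+h"] s win by auto
    then show ?thesis by (simp add: mult_ac)
  qed
qed

end


lemma arith_step:
  fixes A B W A' B' k \<mu> h D P Q Lg m c2 \<beta> :: real
  assumes A: "0 \<le> A" and B: "0 \<le> B" and W: "0 \<le> W" and k: "0 < k" and mu: "0 < \<mu>" and h: "0 < h"
    and D: "0 \<le> D" and P: "0 \<le> P" and Q: "0 \<le> Q" and Lg: "0 \<le> Lg" and m: "1 \<le> m"
    and WPQ: "W \<le> P * B + Q * A"
    and A': "A' \<le> A / 4 + k * W * D"
    and B': "B' \<le> max ((1 - k*\<mu>*h) * B + k^2*\<mu>*h^2*W + k*h*Lg*(m * A + k * W * D)) (k*h*W)"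
    and c2: "c2 = h*Q + \<mu>*h^2*Q + h*Lg*m + h*Lg*D*Q"
    and beta: "\<beta> = 4*D*P/(\<mu>*h) + 1"
    and s4: "k \<le> 1" and s5: "k*(\<mu>*h^2*P + h*Lg*D*P) \<le> \<mu>*h/2" and s6: "k*h*(P + \<mu>/2) \<le> 1"
    and s7: "k*(D*Q + \<beta>*c2 + \<mu>*h/4) \<le> 3/4"
  shows "A' + \<beta> * B' \<le> (1 - k*\<mu>*h/4) * (A + \<beta> * B)"
proof -
  have c20: "0 \<le> c2" unfolding c2 using h Q mu Lg m D by simp
  have "0 \<le> 4*D*P/(\<mu>*h)" using D P mu h by (intro divide_nonneg_pos) auto
  then have b0: "0 < \<beta>" unfolding beta by simp
  have kW: "k * W \<le> k * (P * B + Q * A)" using WPQ k by (intro mult_left_mono) auto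
  have a1: "A' \<le> A / 4 + k * D * P * B + k * D * Q * A"
  proof -
    have "k * W * D \<le> k * (P * B + Q * A) * D" using kW D by (intro mult_right_mono) auto
    then show ?thesis using A' by (simp add: algebra_simps)
  qed
  have br1: "(1 - k*\<mu>*h) * B + k^2*\<mu>*h^2*W + k*h*Lg*(m * A + k * W * D) \<le> (1 - k*\<mu>*h/2) * B + k * c2 * A"
  proof -
    have e1: "k^2*\<mu>*h^2*W \<le> k^2*\<mu>*h^2*(P * B + Q * A)"
      using WPQ k mu h by (intro mult_left_mono) auto
    have e2: "k*h*Lg*(k * W * D) \<le> k*h*Lg*(k * (P * B + Q * A) * D)"
      using kW D k h Lg by (intro mult_left_mono mult_right_mono) auto
    have e3: "k * (k*(\<mu>*h^2*P + h*Lg*D*P)) * B \<le> k * (\<mu>*h/2) * B"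
      using s5 k B by (intro mult_left_mono mult_right_mono) auto
    have e4: "k * k * (\<mu>*h^2*Q + h*Lg*D*Q) * A \<le> k * 1 * (\<mu>*h^2*Q + h*Lg*D*Q) * A"
      using s4 k A mu h Lg D Q by (intro mult_left_mono mult_right_mono) auto
    have e5: "k * (h*Q) * A \<ge> 0" using k h Q A by simp
    have "(1 - k*\<mu>*h) * B + k^2*\<mu>*h^2*W + k*h*Lg*(m * A + k * W * D)
        \<le> (1 - k*\<mu>*h) * B + k^2*\<mu>*h^2*(P * B + Q * A) + k*h*Lg*(m * A + k * (P * B + Q * A) * D)"
      using e1 e2 by (simp add: algebra_simps)
    also have "\<dots> = (1 - k*\<mu>*h) * B + k * (k*(\<mu>*h^2*P + h*Lg*D*P)) * B
                    + k * k * (\<mu>*h^2*Q + h*Lg*D*Q) * A + k * (h*Lg*m) * A"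
      by (simp add: algebra_simps power2_eq_square)
    also have "\<dots> \<le> (1 - k*\<mu>*h) * B + k * (\<mu>*h/2) * B + k * 1 * (\<mu>*h^2*Q + h*Lg*D*Q) * A + k * (h*Lg*m) * A"
      using e3 e4 by linarith
    also have "\<dots> \<le> (1 - k*\<mu>*h/2) * B + k * c2 * A"
      using e5 unfolding c2 by (simp add: algebra_simps)
    finally show ?thesis .
  qed
  have br2: "k*h*W \<le> (1 - k*\<mu>*h/2) * B + k * c2 * A"
  proof -
    have "k*h*W \<le> k*h*(P * B + Q * A)" using WPQ k h by (intro mult_left_mono) auto
    also have "\<dots> = (k*h*P) * B + k*(h*Q) * A" by (simp add: algebra_simps)
    also have "(k*h*P) * B \<le> (1 - k*\<mu>*h/2) * B"
      using s6 B by (intro mult_right_mono) (auto simp: algebra_simps)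
    also have "k*(h*Q) * A \<le> k * c2 * A"
      using k A c2 mu h Lg m D Q by (intro mult_left_mono mult_right_mono) (auto simp: c2)
    finally show ?thesis by simp
  qed
  have b1: "B' \<le> (1 - k*\<mu>*h/2) * B + k * c2 * A" using B' br1 br2 by simp
  have "A' + \<beta> * B' \<le> A / 4 + k * D * P * B + k * D * Q * A + \<beta> * ((1 - k*\<mu>*h/2) * B + k * c2 * A)"
    using a1 b1 b0 by (simp add: mult_left_mono add_mono)
  also have "\<dots> = (1/4 + k * (D * Q + \<beta> * c2)) * A + (k * D * P + \<beta> * (1 - k*\<mu>*h/2)) * B"
    by (simp add: algebra_simps)
  finally have L1: "A' + \<beta> * B' \<le> (1/4 + k * (D * Q + \<beta> * c2)) * A + (k * D * P + \<beta> * (1 - k*\<mu>*h/2)) * B" .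
  have L2: "(1/4 + k * (D * Q + \<beta> * c2)) * A \<le> (1 - k*\<mu>*h/4) * A"
    using s7 A by (intro mult_right_mono) (auto simp: algebra_simps)
  have L3: "(k * D * P + \<beta> * (1 - k*\<mu>*h/2)) * B \<le> (\<beta> * (1 - k*\<mu>*h/4)) * B"
  proof (rule mult_right_mono[OF _ B])
    have "k * D * P = k * (\<mu> * h) / 4 * (4 * D * P / (\<mu> * h))" using mu h by (simp add: field_simps)
    also have "\<dots> \<le> k * (\<mu> * h) / 4 * \<beta>" unfolding beta using k mu h by (intro mult_left_mono) auto
    finally show "k * D * P + \<beta> * (1 - k*\<mu>*h/2) \<le> \<beta> * (1 - k*\<mu>*h/4)" by (simp add: algebra_simps)
  qed
  have f: "A' + \<beta> * B' \<le> (1 - k*\<mu>*h/4) * A + (\<beta> * (1 - k*\<mu>*h/4)) * B" using L1 L2 L3 by linarith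
  have "(1 - k*\<mu>*h/4) * (A + \<beta> * B) = (1 - k*\<mu>*h/4) * A + (\<beta> * (1 - k*\<mu>*h/4)) * B"
    by (simp add: algebra_simps)
  then show ?thesis using f by linarith
qed


locale conv = loop +
  fixes rf ur T0 LG P Q c2 \<beta> :: real and n0 :: nat
  assumes rfin: "\<And>t. T0 \<le> t \<Longrightarrow> r t = rf" and urU: "ur \<in> {umin..umax}" and gur: "g (\<Xi> ur) = rf"
    and n0: "T0 \<le> real n0 * h"
    and LG_def: "LG = Lg * LX" and P_def: "P = 2 * LG" and Q_def: "Q = 2 * Lg * m"
    and c2_def: "c2 = h*Q + \<mu>*h^2*Q + h*Lg*m + h*Lg*D*Q"
    and beta_def: "\<beta> = 4*D*P/(\<mu>*h) + 1"
    and s3: "k*(LG*h + Lg*D) \<le> 1/2" and s4: "k \<le> 1" and s5: "k*(\<mu>*h^2*P + h*Lg*D*P) \<le> \<mu>*h/2"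
    and s6: "k*h*(P + \<mu>/2) \<le> 1" and s7: "k*(D*Q + \<beta>*c2 + \<mu>*h/4) \<le> 3/4"
begin

abbreviation "eA n \<equiv> norm (x (real n * h) - \<Xi> (uI (real n * h)))"
abbreviation "eB n \<equiv> \<bar>uI (real n * h) - ur\<bar>"

lemma D0: "0 \<le> D" unfolding D_def D1_def using L0 h0 taup LX0 by simp
lemma LG0: "0 \<le> LG" unfolding LG_def using Lg0 LX0 by simp
lemma P0: "0 \<le> P" unfolding P_def using LG0 by simp
lemma Q0: "0 \<le> Q" unfolding Q_def using Lg0 m1 by simp
lemma beta1: "1 \<le> \<beta>"
proof -
  have "0 \<le> 4*D*P/(\<mu>*h)" using D0 P0 mu h0 by (intro divide_nonneg_pos) auto
  then show ?thesis unfolding beta_def by simp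
qed

lemma wstep:
  assumes n: "n0 \<le> n"
  shows "\<exists>W. 0 \<le> W \<and> W \<le> P * eB n + Q * eA n
    \<and> (\<forall>t\<in>{real n * h..real n * h + h}. norm (x t - \<Xi> (uI t)) \<le> m * eA n + k * W * D
          \<and> \<bar>uI t - ur\<bar> \<le> eB n + k * W * h \<and> \<bar>rf - g (x t)\<bar> \<le> W)
    \<and> eA (Suc n) \<le> eA n / 4 + k * W * D
    \<and> eB (Suc n) \<le> max ((1 - k*\<mu>*h) * eB n + k^2*\<mu>*h^2*W + k*h*Lg*(m * eA n + k * W * D)) (k*h*W)"
proof -
  define t0 where "t0 = real n * h"
  have t0: "0 \<le> t0" using h0 by (simp add: t0_def)
  have "real n0 * h \<le> real n * h" using n h0 by (intro mult_right_mono) auto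
  then have T0t0: "T0 \<le> t0" using n0 by (simp add: t0_def)
  have rfw: "\<forall>t\<in>{t0..t0+h}. r t = rf" using rfin T0t0 by auto
  have win_ne: "{t0..t0+h} \<noteq> {}" using h0 by simp
  have phic: "continuous_on {t0..t0+h} (\<lambda>t. \<bar>rf - g (x t)\<bar>)"
    by (intro continuous_intros continuous_on_compose2[OF gcont xcont[OF t0] subset_UNIV])
  obtain ts where ts: "ts \<in> {t0..t0+h}" "\<forall>t\<in>{t0..t0+h}. \<bar>rf - g (x t)\<bar> \<le> \<bar>rf - g (x ts)\<bar>"
    using continuous_attains_sup[OF compact_Icc win_ne phic] by blast
  define W where "W = \<bar>rf - g (x ts)\<bar>"
  have W0': "0 \<le> W" by (simp add: W_def)
  have tsp: "0 \<le> ts" using ts t0 by auto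
  have WW0: "W \<le> W0" using rW0[OF tsp allK[OF tsp]] rfw ts by (simp add: W_def)
  have rW: "\<forall>t\<in>{t0..t0+h}. x t \<in> K \<longrightarrow> \<bar>r t - g (x t)\<bar> \<le> W" using ts rfw by (simp add: W_def)
  have inv: "norm (x t0 - \<Xi> (uI t0)) \<le> \<epsilon>0" using invariant[of n] by (simp add: t0_def)
  note w1 = window(1)[OF t0 inv W0' WW0 rW] and w2 = window(2)[OF t0 inv W0' WW0 rW]
  have uIb: "\<bar>uI t - ur\<bar> \<le> eB n + k * W * h" if t: "t \<in> {t0..t0+h}" for t
  proof -
    have "\<bar>uI t - uI t0\<bar> \<le> k * W * (t - t0)"
      by (rule uI_lip[OF t0 _ W0']) (use t rfw ts in \<open>auto simp: W_def\<close>)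
    also have "\<dots> \<le> k * W * h" using t k0 W0' by (intro mult_left_mono) auto
    finally show ?thesis by (simp add: t0_def)
  qed
  have eb: "norm (x t - \<Xi> (uI t)) \<le> m * eA n + k * W * D" if "t \<in> {t0..t0+h}" for t
    using w1 that by (simp add: t0_def)
  have Wb: "W \<le> P * eB n + Q * eA n"
  proof -
    have uts: "uI ts \<in> {umin..umax}" using uI_in[OF tsp] .
    have XK: "\<Xi> u \<in> K" if "u \<in> {umin..umax}" for u using inK[OF that, of "\<Xi> u"] eps0 m1 by simp
    have "\<bar>g (\<Xi> ur) - g (\<Xi> (uI ts))\<bar> \<le> Lg * norm (\<Xi> ur - \<Xi> (uI ts))" by (rule gLip[OF XK[OF urU] XK[OF uts]])
    also have "\<dots> \<le> Lg * (LX * \<bar>ur - uI ts\<bar>)" using XiLip[OF urU uts] Lg0 by (intro mult_left_mono) auto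
    also have "\<dots> = LG * \<bar>uI ts - ur\<bar>" by (simp add: LG_def abs_minus_commute)
    also have "\<dots> \<le> LG * (eB n + k * W * h)" using uIb[OF ts(1)] LG0 by (intro mult_left_mono) auto
    finally have g1: "\<bar>g (\<Xi> ur) - g (\<Xi> (uI ts))\<bar> \<le> LG * (eB n + k * W * h)" .
    have "\<bar>g (\<Xi> (uI ts)) - g (x ts)\<bar> \<le> Lg * norm (\<Xi> (uI ts) - x ts)" by (rule gLip[OF XK[OF uts] allK[OF tsp]])
    also have "\<dots> \<le> Lg * (m * eA n + k * W * D)" using eb[OF ts(1)] Lg0 by (intro mult_left_mono) (auto simp: norm_minus_commute)
    finally have g2: "\<bar>g (\<Xi> (uI ts)) - g (x ts)\<bar> \<le> Lg * (m * eA n + k * W * D)" .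
    have "W \<le> \<bar>g (\<Xi> ur) - g (\<Xi> (uI ts))\<bar> + \<bar>g (\<Xi> (uI ts)) - g (x ts)\<bar>" unfolding W_def gur[symmetric] by linarith
    then have "W \<le> LG * eB n + Lg * m * eA n + W * (k * (LG * h + Lg * D))" using g1 g2 by (simp add: algebra_simps)
    moreover have "W * (k * (LG * h + Lg * D)) \<le> W * (1/2)" using s3 W0' by (intro mult_left_mono) auto
    ultimately show ?thesis unfolding P_def Q_def by simp
  qed
  have vs: "\<bar>uI (t0+h) - ur\<bar> \<le> max ((1 - k*\<mu>*h) * \<bar>uI t0 - ur\<bar> + k^2*\<mu>*h^2*W + k*h*Lg*(m * eA n + k * W * D)) (k*h*W)"
    by (rule vstep[OF t0 rfw urU gur W0']) (use ts eb in \<open>auto simp: W_def\<close>)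
  have suc: "real (Suc n) * h = t0 + h" by (simp add: t0_def algebra_simps)
  show ?thesis
  proof (intro exI conjI ballI)
    show "0 \<le> W" by (rule W0')
    show "W \<le> P * eB n + Q * eA n" by (rule Wb)
    fix t assume t: "t \<in> {real n * h..real n * h + h}"
    then have t': "t \<in> {t0..t0+h}" by (simp add: t0_def)
    show "norm (x t - \<Xi> (uI t)) \<le> m * eA n + k * W * D" by (rule eb[OF t'])
    show "\<bar>uI t - ur\<bar> \<le> eB n + k * W * h" by (rule uIb[OF t'])
    show "\<bar>rf - g (x t)\<bar> \<le> W" using ts t' by (simp add: W_def)
  next
    show "eA (Suc n) \<le> eA n / 4 + k * W * D" using w2 by (simp only: suc) (simp add: t0_def)
    show "eB (Suc n) \<le> max ((1 - k*\<mu>*h) * eB n + k^2*\<mu>*h^2*W + k*h*Lg*(m * eA n + k * W * D)) (k*h*W)"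
      using vs by (simp only: suc) (simp add: t0_def)
  qed
qed


abbreviation "NN n \<equiv> eA n + \<beta> * eB n"
definition "\<rho> = 1 - k*\<mu>*h/4"

lemma rho: "0 < \<rho>" "\<rho> < 1"
proof -
  have "k*h*(\<mu>/2) \<le> k*h*(P + \<mu>/2)" using k0 h0 P0 by (intro mult_left_mono) auto
  then have "k*h*(\<mu>/2) \<le> 1" using s6 by linarith
  then have "k*\<mu>*h/4 \<le> 1/2" by (simp add: algebra_simps)
  then show "0 < \<rho>" unfolding \<rho>_def by linarith
  show "\<rho> < 1" unfolding \<rho>_def using k0 mu h0 by simp
qed

lemma Nstep: "n0 \<le> n \<Longrightarrow> NN (Suc n) \<le> \<rho> * NN n"
proof -
  assume n: "n0 \<le> n"
  obtain W where W: "0 \<le> W" "W \<le> P * eB n + Q * eA n"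
    and A': "eA (Suc n) \<le> eA n / 4 + k * W * D"
    and B': "eB (Suc n) \<le> max ((1 - k*\<mu>*h) * eB n + k^2*\<mu>*h^2*W + k*h*Lg*(m * eA n + k * W * D)) (k*h*W)"
    using wstep[OF n] by blast
  show ?thesis unfolding \<rho>_def
    by (rule arith_step[OF norm_ge_zero abs_ge_zero W(1) k0 mu h0 D0 P0 Q0 Lg0 m1 W(2) A' B' c2_def beta_def s4 s5 s6 s7])
qed

lemma Ndecay: "n0 \<le> n \<Longrightarrow> NN n \<le> \<rho> ^ (n - n0) * NN n0"
proof (induction n rule: dec_induct)
  case base then show ?case by simp
next
  case (step n)
  have "NN (Suc n) \<le> \<rho> * NN n" by (rule Nstep[OF step(1)])
  also have "\<dots> \<le> \<rho> * (\<rho> ^ (n - n0) * NN n0)" using step(3) rho by (intro mult_left_mono) auto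
  also have "\<dots> = \<rho> ^ (Suc n - n0) * NN n0" using step(1) by (simp add: Suc_diff_le)
  finally show ?case .
qed

definition "Z = (m + k*D*(P+Q)) + LX*(1 + k*h*(P+Q)) + (1 + k*h*(P+Q)) + \<tau>p*k*(P+Q) + (P+Q)"

lemma winbound:
  assumes n: "n0 \<le> n" and t: "t \<in> {real n * h..real n * h + h}"
  shows "norm (x t - \<Xi> ur) \<le> Z * NN n \<and> \<bar>pin t - ur\<bar> \<le> Z * NN n \<and> \<bar>g (x t) - rf\<bar> \<le> Z * NN n"
proof -
  obtain W where W: "0 \<le> W" "W \<le> P * eB n + Q * eA n"
    and wb: "\<forall>t\<in>{real n * h..real n * h + h}. norm (x t - \<Xi> (uI t)) \<le> m * eA n + k * W * D
          \<and> \<bar>uI t - ur\<bar> \<le> eB n + k * W * h \<and> \<bar>rf - g (x t)\<bar> \<le> W"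
    using wstep[OF n] by blast
  have eAN: "eA n \<le> NN n" using beta1 by simp
  have eBN: "eB n \<le> NN n"
  proof -
    have "eB n \<le> \<beta> * eB n" using beta1 by (simp add: mult_le_cancel_right1)
    moreover have "0 \<le> eA n" by simp
    ultimately show ?thesis by linarith
  qed
  have N0: "0 \<le> NN n" using beta1 by simp
  have WN: "W \<le> (P+Q) * NN n"
  proof -
    have "P * eB n \<le> P * NN n" using P0 eBN by (intro mult_left_mono) auto
    moreover have "Q * eA n \<le> Q * NN n" using Q0 eAN by (intro mult_left_mono) auto
    ultimately show ?thesis using W by (simp add: algebra_simps)
  qed
  have kW: "k * W \<le> k * ((P+Q) * NN n)" using WN k0 by (intro mult_left_mono) auto
  have e: "norm (x t - \<Xi> (uI t)) \<le> (m + k*D*(P+Q)) * NN n"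
  proof -
    have "m * eA n \<le> m * NN n" using m1 eAN by (intro mult_left_mono) auto
    moreover have "k * W * D \<le> k * ((P+Q) * NN n) * D" using kW D0 by (intro mult_right_mono) auto
    moreover have "norm (x t - \<Xi> (uI t)) \<le> m * eA n + k * W * D" using wb t by blast
    moreover have "(m + k*D*(P+Q)) * NN n = m * NN n + k * ((P+Q) * NN n) * D" by (simp add: algebra_simps)
    ultimately show ?thesis by linarith
  qed
  have u: "\<bar>uI t - ur\<bar> \<le> (1 + k*h*(P+Q)) * NN n"
  proof -
    have "k * W * h \<le> k * ((P+Q) * NN n) * h" using kW h0 by (intro mult_right_mono) auto
    moreover have "\<bar>uI t - ur\<bar> \<le> eB n + k * W * h" using wb t by blast
    moreover have "(1 + k*h*(P+Q)) * NN n = NN n + k * ((P+Q) * NN n) * h" by (simp add: algebra_simps)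
    ultimately show ?thesis using eBN by linarith
  qed
  have w: "\<bar>rf - g (x t)\<bar> \<le> (P+Q) * NN n"
  proof -
    have "\<bar>rf - g (x t)\<bar> \<le> W" using wb t by blast
    then show ?thesis using WN by linarith
  qed
  have t0: "0 \<le> t"
  proof -
    have a: "0 \<le> real n * h" using h0 by simp
    have b: "real n * h \<le> t" using t by simp
    from a b show ?thesis by linarith
  qed
  have x1: "norm (x t - \<Xi> ur) \<le> norm (x t - \<Xi> (uI t)) + norm (\<Xi> (uI t) - \<Xi> ur)"
    using norm_triangle_ineq[of "x t - \<Xi> (uI t)" "\<Xi> (uI t) - \<Xi> ur"] by simp
  have x2: "norm (\<Xi> (uI t) - \<Xi> ur) \<le> LX * ((1 + k*h*(P+Q)) * NN n)"
  proof -
    have "norm (\<Xi> (uI t) - \<Xi> ur) \<le> LX * \<bar>uI t - ur\<bar>" by (rule XiLip[OF uI_in[OF t0] urU])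
    also have "\<dots> \<le> LX * ((1 + k*h*(P+Q)) * NN n)" using u LX0 by (intro mult_left_mono) auto
    finally show ?thesis .
  qed
  have rt: "r t = rf"
  proof -
    have "real n0 * h \<le> real n * h" using n h0 by (intro mult_right_mono) auto
    then show ?thesis using rfin n0 t by auto
  qed
  have p1: "\<bar>\<tau>p * k * (r t - g (x t))\<bar> \<le> \<tau>p * k * ((P+Q) * NN n)"
    using w rt taup k0 by (simp add: abs_mult mult_left_mono)
  have Zparts: "0 \<le> LX*(1 + k*h*(P+Q))" "0 \<le> (1 + k*h*(P+Q))" "0 \<le> \<tau>p*k*(P+Q)" "0 \<le> P+Q"
      "0 \<le> m + k*D*(P+Q)"
    using LX0 k0 h0 P0 Q0 taup m1 D0 by auto
  have Z1: "(m + k*D*(P+Q)) + LX*(1 + k*h*(P+Q)) \<le> Z" using Zparts unfolding Z_def by linarith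
  have Z2: "(1 + k*h*(P+Q)) + \<tau>p*k*(P+Q) \<le> Z" using Zparts unfolding Z_def by linarith
  have Z3: "P + Q \<le> Z" using Zparts unfolding Z_def by linarith
  have "norm (x t - \<Xi> ur) \<le> ((m + k*D*(P+Q)) + LX*(1 + k*h*(P+Q))) * NN n"
    using x1 x2 e by (simp add: algebra_simps)
  also have "\<dots> \<le> Z * NN n" using Z1 N0 by (intro mult_right_mono) auto
  finally have r1: "norm (x t - \<Xi> ur) \<le> Z * NN n" .
  have "\<bar>pin t - ur\<bar> \<le> \<bar>uI t - ur\<bar> + \<bar>\<tau>p * k * (r t - g (x t))\<bar>" by linarith
  also have "\<dots> \<le> ((1 + k*h*(P+Q)) + \<tau>p*k*(P+Q)) * NN n" using u p1 by (simp add: algebra_simps)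
  also have "\<dots> \<le> Z * NN n" using Z2 N0 by (intro mult_right_mono) auto
  finally have r2: "\<bar>pin t - ur\<bar> \<le> Z * NN n" .
  have "\<bar>g (x t) - rf\<bar> \<le> (P+Q) * NN n" using w by (simp add: abs_minus_commute)
  also have "\<dots> \<le> Z * NN n" using Z3 N0 by (intro mult_right_mono) auto
  finally show ?thesis using r1 r2 by simp
qed


lemma crude:
  assumes t: "0 \<le> t"
  defines "Bc \<equiv> (2 * c0 + R) + (umax - umin + 1) + (Mg + Yb)"
  shows "norm (x t - \<Xi> ur) \<le> Bc \<and> \<bar>pin t - ur\<bar> \<le> Bc \<and> \<bar>g (x t) - rf\<bar> \<le> Bc"
proof -
  have c00: "0 \<le> c0" using c0[OF urU] norm_ge_zero[of "\<Xi> ur"] by linarith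
  have R0: "0 \<le> R" using eps0 m1 by simp
  have parts: "0 \<le> 2 * c0 + R" "0 \<le> umax - umin + 1" "0 \<le> Mg + Yb"
    using c00 R0 umin_less Mg0 Yb0 by auto
  have xK: "x t \<in> K" by (rule allK[OF t])
  have "norm (x t - \<Xi> ur) \<le> norm (x t) + norm (\<Xi> ur)" by (rule norm_triangle_ineq4)
  also have "\<dots> \<le> (c0 + R) + c0" using xK c0[OF urU] by (intro add_mono) (auto simp: algebra_simps)
  finally have b1: "norm (x t - \<Xi> ur) \<le> Bc" unfolding Bc_def using parts by linarith
  have rg: "\<bar>r t - g (x t)\<bar> \<le> W0" by (rule rW0[OF t xK])
  have "\<bar>\<tau>p * k * (r t - g (x t))\<bar> \<le> \<tau>p * k * W0" using rg taup k0 by (simp add: abs_mult mult_left_mono)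
  also have "\<dots> \<le> 1" using s2 by (simp add: mult_ac)
  finally have p1: "\<bar>\<tau>p * k * (r t - g (x t))\<bar> \<le> 1" .
  have "\<bar>uI t - ur\<bar> \<le> umax - umin" using uI_in[OF t] urU by auto
  then have b2: "\<bar>pin t - ur\<bar> \<le> Bc" unfolding Bc_def using parts p1 by linarith
  define t' where "t' = max T0 0"
  have "r t' = rf" using rfin[of t'] by (simp add: t'_def)
  then have "\<bar>rf\<bar> \<le> Yb" using Yb[OF rY[of t']] by (simp add: t'_def)
  moreover have "\<bar>g (x t)\<bar> \<le> Mg" by (rule gbd[OF xK])
  ultimately have b3: "\<bar>g (x t) - rf\<bar> \<le> Bc" unfolding Bc_def using parts by linarith
  show ?thesis using b1 b2 b3 by simp
qed

lemma converge:
  "\<exists>C \<alpha>. \<alpha> > 0 \<and> (\<forall>t\<ge>0. norm (x t - \<Xi> ur) \<le> C * exp (- \<alpha> * t)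
       \<and> \<bar>uI t + \<tau>p * k * (r t - g (x t)) - ur\<bar> \<le> C * exp (- \<alpha> * t)
       \<and> \<bar>g (x t) - rf\<bar> \<le> C * exp (- \<alpha> * t))"
proof -
  define Bc where "Bc = (2 * c0 + R) + (umax - umin + 1) + (Mg + Yb)"
  define \<alpha> where "\<alpha> = - ln \<rho> / h"
  have lnr: "ln \<rho> < 0" using rho by simp
  have "0 < - ln \<rho> / h" using lnr h0 by (intro divide_pos_pos) auto
  then have al: "0 < \<alpha>" unfolding \<alpha>_def .
  have rpow: "\<rho> ^ j = exp (- \<alpha> * (h * real j))" for j :: nat
  proof -
    have "\<rho> = exp (- \<alpha> * h)" unfolding \<alpha>_def using rho h0 by simp
    then have "\<rho> ^ j = exp (- \<alpha> * h) ^ j" by simp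
    also have "\<dots> = exp (real j * (- \<alpha> * h))" by (rule exp_of_nat_mult[symmetric])
    finally show ?thesis by (simp add: mult_ac)
  qed
  have Bc0: "0 \<le> Bc" using crude[of 0] by (simp add: Bc_def) (meson abs_ge_zero order_trans)
  have Z0: "0 \<le> Z" unfolding Z_def using LX0 k0 h0 P0 Q0 taup m1 D0 by auto
  have N00: "0 \<le> NN n0" using beta1 by simp
  define C where "C = Bc * exp (\<alpha> * (real n0 * h)) + Z * NN n0 * exp (\<alpha> * (h + real n0 * h))"
  have C1: "Bc * exp (\<alpha> * (real n0 * h)) \<le> C" unfolding C_def using Z0 N00 by simp
  have C2: "Z * NN n0 * exp (\<alpha> * (h + real n0 * h)) \<le> C" unfolding C_def using Bc0 by simp
  have main: "norm (x t - \<Xi> ur) \<le> C * exp (- \<alpha> * t) \<and> \<bar>pin t - ur\<bar> \<le> C * exp (- \<alpha> * t)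
       \<and> \<bar>g (x t) - rf\<bar> \<le> C * exp (- \<alpha> * t)" if t: "0 \<le> t" for t
  proof (cases "t < real n0 * h")
    case True
    have "Bc = Bc * exp (\<alpha> * (real n0 * h)) * exp (- \<alpha> * t) * exp (\<alpha> * (t - real n0 * h))"
      by (simp add: exp_add[symmetric] algebra_simps)
    also have "\<dots> \<le> Bc * exp (\<alpha> * (real n0 * h)) * exp (- \<alpha> * t) * 1"
    proof -
      have "\<alpha> * (t - real n0 * h) \<le> 0" using True al by (simp add: mult_nonneg_nonpos less_imp_le)
      then have "exp (\<alpha> * (t - real n0 * h)) \<le> 1" by simp
      then show ?thesis using Bc0 by (intro mult_left_mono) auto
    qed
    also have "\<dots> \<le> C * exp (- \<alpha> * t)" using mult_right_mono[OF C1, of "exp (- \<alpha> * t)"] by simp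
    finally have "Bc \<le> C * exp (- \<alpha> * t)" by simp
    then show ?thesis using crude[OF t] unfolding Bc_def by (meson order_trans)
  next
    case False
    obtain n :: nat where n: "real n * h \<le> t" "t \<le> real n * h + h" using floor_window[OF t h0] by blast
    define n' where "n' = (if n0 \<le> n then n else n0)"
    have n': "n0 \<le> n'" by (simp add: n'_def)
    have tw: "t \<in> {real n' * h..real n' * h + h}"
    proof (cases "n0 \<le> n")
      case True then show ?thesis using n by (simp add: n'_def)
    next
      case False
      then have "real n + 1 \<le> real n0" by simp
      then have "(real n + 1) * h \<le> real n0 * h" using h0 by (intro mult_right_mono) auto
      then have "t = real n0 * h" using n \<open>\<not> t < real n0 * h\<close> by (simp add: algebra_simps)
      then show ?thesis using False h0 by (simp add: n'_def)
    qed
    have "Z * NN n' \<le> Z * (\<rho> ^ (n' - n0) * NN n0)" using Ndecay[OF n'] Z0 by (intro mult_left_mono) auto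
    also have "\<dots> = Z * NN n0 * exp (- \<alpha> * (h * real (n' - n0)))" by (simp add: rpow mult_ac)
    also have "exp (- \<alpha> * (h * real (n' - n0))) \<le> exp (\<alpha> * (h + real n0 * h)) * exp (- \<alpha> * t)"
    proof -
      have "t \<le> real n' * h + h" using tw by simp
      then have "\<alpha> * t \<le> \<alpha> * (real n' * h + h)" using al by (intro mult_left_mono) auto
      moreover have "real (n' - n0) = real n' - real n0" using n' by simp
      ultimately have "- \<alpha> * (h * real (n' - n0)) \<le> \<alpha> * (h + real n0 * h) + - \<alpha> * t"
        by (simp add: algebra_simps)
      then show ?thesis by (simp add: exp_add[symmetric])
    qed
    then have "Z * NN n0 * exp (- \<alpha> * (h * real (n' - n0))) \<le> Z * NN n0 * (exp (\<alpha> * (h + real n0 * h)) * exp (- \<alpha> * t))"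
      using Z0 N00 by (intro mult_left_mono) auto
    also have "\<dots> \<le> C * exp (- \<alpha> * t)" using C2 by (simp add: mult.assoc[symmetric] mult_right_mono)
    finally have ZN: "Z * NN n' \<le> C * exp (- \<alpha> * t)" .
    then show ?thesis using winbound[OF n' tw] by (meson order_trans)
  qed
  show ?thesis using al main by blast
qed

end


lemma ll_local:
  assumes "locally_lipschitz (g :: 'a::metric_space \<Rightarrow> real)"
  shows "local_lipschitz {0::real} X (\<lambda>_. g)"
proof (rule local_lipschitzI)
  fix t :: real and z assume "z \<in> X"
  obtain e L where e: "e > 0" and L: "\<forall>a\<in>ball z e. \<forall>b\<in>ball z e. dist (g a) (g b) \<le> L * dist a b"
    using assms unfolding locally_lipschitz_def by blast
  have "(max L 0)-lipschitz_on (cball z (e/2) \<inter> X) g"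
  proof (rule lipschitz_onI)
    fix a b assume a: "a \<in> cball z (e/2) \<inter> X" and b: "b \<in> cball z (e/2) \<inter> X"
    have "a \<in> ball z e" "b \<in> ball z e" using a b e by auto
    then have "dist (g a) (g b) \<le> L * dist a b" using L by blast
    also have "\<dots> \<le> max L 0 * dist a b" by (intro mult_right_mono) auto
    finally show "dist (g a) (g b) \<le> max L 0 * dist a b" .
  qed auto
  then show "\<exists>u>0. \<exists>L. \<forall>t\<in>cball t u \<inter> {0::real}. L-lipschitz_on (cball z u \<inter> X) ((\<lambda>_. g) t)"
    using e by (intro exI[of _ "e/2"]) auto
qed

lemma consts_g:
  fixes g :: "'a::metric_space \<Rightarrow> real"
  assumes ll: "locally_lipschitz g" and X: "compact X"
  shows "continuous_on UNIV g \<and> (\<exists>Lg Mg. 0 \<le> Lg \<and> (\<forall>a\<in>X. \<forall>b\<in>X. \<bar>g a - g b\<bar> \<le> Lg * dist a b) \<and> (\<forall>a\<in>X. \<bar>g a\<bar> \<le> Mg))"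
proof -
  have gc: "continuous_on UNIV g"
    using local_lipschitz_continuous_on[OF ll_local[OF ll, of UNIV], of "0::real"] by simp
  obtain Lg where Lg: "\<And>t. t \<in> {0::real} \<Longrightarrow> Lg-lipschitz_on X ((\<lambda>_. g) t)"
    using local_lipschitz_compact_implies_lipschitz[OF ll_local[OF ll, of X] X compact_sing] by auto
  have L: "Lg-lipschitz_on X g" using Lg[of "0::real"] by simp
  have "bounded (g ` X)" by (rule compact_imp_bounded[OF compact_continuous_image[OF continuous_on_subset[OF gc] X]]) simp
  then obtain Mg where "\<forall>y\<in>g ` X. norm y \<le> Mg" by (auto simp: bounded_iff)
  then have Mg: "\<forall>a\<in>X. \<bar>g a\<bar> \<le> Mg" by auto
  show ?thesis using gc L Mg lipschitz_on_nonneg[OF L]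
    by (intro conjI exI[of _ Lg] exI[of _ Mg]) (auto simp: lipschitz_on_def dist_real_def)
qed

lemma consts_F:
  fixes F :: "'a::real_normed_vector \<Rightarrow> 'b::real_normed_vector"
  assumes C: "C2 F" and S: "compact S" "convex S" "S \<noteq> {}"
  shows "\<exists>L M. 0 \<le> L \<and> (\<forall>p\<in>S. \<forall>q\<in>S. norm (F p - F q) \<le> L * norm (p - q)) \<and> (\<forall>p\<in>S. norm (F p) \<le> M)"
proof -
  obtain DF D2F where d1: "\<forall>z. (F has_derivative blinfun_apply (DF z)) (at z)"
    and d2: "\<forall>z. (DF has_derivative blinfun_apply (D2F z)) (at z)"
    using C unfolding C2_def by blast
  have DFc: "continuous_on UNIV DF"
    using d2 by (auto intro!: continuous_at_imp_continuous_on has_derivative_continuous)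
  have Fc: "continuous_on UNIV F"
    using d1 by (auto intro!: continuous_at_imp_continuous_on has_derivative_continuous)
  have "bounded (DF ` S)" by (rule compact_imp_bounded[OF compact_continuous_image[OF continuous_on_subset[OF DFc] S(1)]]) simp
  then obtain B where B: "\<forall>y\<in>DF ` S. norm y \<le> B" by (auto simp: bounded_iff)
  have "bounded (F ` S)" by (rule compact_imp_bounded[OF compact_continuous_image[OF continuous_on_subset[OF Fc] S(1)]]) simp
  then obtain M where M: "\<forall>y\<in>F ` S. norm y \<le> M" by (auto simp: bounded_iff)
  obtain p0 where p0: "p0 \<in> S" using S(3) by blast
  have "norm (DF p0) \<le> B" using B p0 by blast
  then have B0: "0 \<le> B" using norm_ge_zero[of "DF p0"] by linarith
  have lip: "norm (F p - F q) \<le> B * norm (p - q)" if "p \<in> S" "q \<in> S" for p q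
  proof (rule differentiable_bound[OF S(2) _ _ that])
    show "(F has_derivative blinfun_apply (DF z)) (at z within S)" if "z \<in> S" for z
      using d1 by (auto intro: has_derivative_at_withinI)
    show "onorm (blinfun_apply (DF z)) \<le> B" if "z \<in> S" for z
      using B that by (simp add: norm_blinfun.rep_eq[symmetric])
  qed
  show ?thesis using lip M B0 by blast
qed

lemma consts_Xi:
  fixes \<Xi> :: "real \<Rightarrow> 'a::real_normed_vector"
  assumes lt: "umin < umax" and d0: "0 < \<delta>" and C: "C1_on {umin - \<delta>..umax + \<delta>} \<Xi>"
  shows "\<exists>c0 LX. 0 \<le> LX \<and> (\<forall>u\<in>{umin..umax}. norm (\<Xi> u) \<le> c0)
     \<and> (\<forall>u\<in>{umin..umax}. \<forall>u'\<in>{umin..umax}. norm (\<Xi> u - \<Xi> u') \<le> LX * \<bar>u - u'\<bar>)"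
proof -
  obtain DF where d: "\<forall>u\<in>{umin - \<delta>..umax + \<delta>}. (\<Xi> has_vector_derivative DF u) (at u within {umin - \<delta>..umax + \<delta>})"
    and cDF: "continuous_on {umin - \<delta>..umax + \<delta>} DF"
    using C unfolding C1_on_def by blast
  have sub: "{umin..umax} \<subseteq> {umin - \<delta>..umax + \<delta>}" using d0 by auto
  have cont: "continuous_on {umin - \<delta>..umax + \<delta>} \<Xi>"
    using d by (auto simp: continuous_on_eq_continuous_within intro: has_vector_derivative_continuous)
  have "bounded (\<Xi> ` {umin..umax})"
    by (rule compact_imp_bounded[OF compact_continuous_image[OF continuous_on_subset[OF cont sub] compact_Icc]])
  then obtain c0 where c0: "\<forall>y\<in>\<Xi> ` {umin..umax}. norm y \<le> c0" by (auto simp: bounded_iff)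
  have "bounded (DF ` {umin..umax})"
    by (rule compact_imp_bounded[OF compact_continuous_image[OF continuous_on_subset[OF cDF sub] compact_Icc]])
  then obtain B where B: "\<forall>y\<in>DF ` {umin..umax}. norm y \<le> B" by (auto simp: bounded_iff)
  have "norm (DF umin) \<le> B" using B lt by auto
  then have B0: "0 \<le> B" using norm_ge_zero[of "DF umin"] by linarith
  have lip: "norm (\<Xi> u - \<Xi> u') \<le> B * \<bar>u - u'\<bar>" if "u \<in> {umin..umax}" "u' \<in> {umin..umax}" for u u'
  proof -
    have "norm (\<Xi> u - \<Xi> u') \<le> B * norm (u - u')"
    proof (rule differentiable_bound[OF convex_real_interval(5) _ _ that])
      show "(\<Xi> has_derivative (\<lambda>h. h *\<^sub>R DF z)) (at z within {umin..umax})" if "z \<in> {umin..umax}" for z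
        using has_vector_derivative_within_subset[OF d[rule_format, of z] sub] that sub
        by (auto simp: has_vector_derivative_def)
      show "onorm (\<lambda>h. h *\<^sub>R DF z) \<le> B" if "z \<in> {umin..umax}" for z
        using B that onorm_scaleR_left[OF bounded_linear_ident, of "DF z"] onorm_id[where 'a=real] by simp
    qed
    then show ?thesis by simp
  qed
  show ?thesis using B0 c0 lip by blast
qed


lemma small:
  fixes a b k :: real
  assumes "0 \<le> a" "0 < b" "0 < k" "k < b / (a + 1)"
  shows "k * a \<le> b"
proof -
  have "k * (a + 1) < b" using assms by (simp add: pos_less_divide_eq)
  moreover have "k * a \<le> k * (a + 1)" using assms by simp
  ultimately show ?thesis by linarith
qed

theorem proposition2:
  fixes f :: "real^'n \<Rightarrow> real \<Rightarrow> real^'n" and g :: "real^'n \<Rightarrow> real"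
    and \<Xi> :: "real \<Rightarrow> real^'n"
    and umin umax \<delta> \<epsilon>0 lam m \<mu> \<tau>p :: real
  assumes "umin < umax"
    and "C2 (\<lambda>z::(real^'n) \<times> real. f (fst z) (snd z))"
    and "locally_lipschitz g"
    and "assumption_A1 f umin umax \<delta> \<Xi> \<epsilon>0 lam m"
    and "\<mu> > 0"
    and "\<forall>a\<in>{umin - \<delta> .. umax + \<delta>}. \<forall>b\<in>{umin - \<delta> .. umax + \<delta>}.
           a < b \<longrightarrow> g (\<Xi> b) - g (\<Xi> a) \<ge> \<mu> * (b - a)"
    and "\<tau>p \<ge> 0"
  shows "\<exists>\<kappa>>0. \<forall>k. 0 < k \<and> k < \<kappa> \<longrightarrow> (\<exists>Tb>0. \<forall>r J rf ur x uI.
           finite J \<and> J \<subseteq> {0<..} \<and> (\<forall>t1\<in>J. \<forall>t2\<in>J. t1 \<noteq> t2 \<longrightarrow> \<bar>t1 - t2\<bar> \<ge> Tb)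
           \<and> (\<forall>t\<ge>0. r t \<in> {g (\<Xi> umin) .. g (\<Xi> umax)})
           \<and> (\<forall>t\<in>{0..} - J. \<exists>e>0. \<forall>s\<ge>0. \<bar>s - t\<bar> < e \<longrightarrow> r s = r t)
           \<and> (\<exists>T0. \<forall>t\<ge>T0. r t = rf)
           \<and> ur \<in> {umin..umax} \<and> g (\<Xi> ur) = rf
           \<and> uI 0 \<in> {umin..umax} \<and> norm (x 0 - \<Xi> (uI 0)) \<le> \<epsilon>0
           \<and> closed_loop_solution f g umin umax \<tau>p k r x uI
           \<longrightarrow> (\<exists>C \<alpha>. \<alpha> > 0 \<and> (\<forall>t\<ge>0.
                  norm (x t - \<Xi> ur) \<le> C * exp (- \<alpha> * t)
                \<and> \<bar>uI t + \<tau>p * k * (r t - g (x t)) - ur\<bar> \<le> C * exp (- \<alpha> * t)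
                \<and> \<bar>g (x t) - rf\<bar> \<le> C * exp (- \<alpha> * t))))"
proof -
  note lt = assms(1) and C2f = assms(2) and llg = assms(3) and A1a = assms(4)
    and mu = assms(5) and Gm = assms(6) and taup = assms(7)
  have d0: "0 < \<delta>" and C1: "C1_on {umin - \<delta>..umax + \<delta>} \<Xi>" and eps0: "0 < \<epsilon>0"
    and lam: "0 < lam" and m1: "1 \<le> m"
    using A1a unfolding assumption_A1_def by auto
  have A1f: "\<forall>u0\<in>{umin - \<delta>..umax + \<delta>}. \<forall>T (x::real \<Rightarrow> real^'n).
        (\<forall>t\<in>{0..T}. (x has_vector_derivative f (x t) u0) (at t within {0..T})) \<and>
        norm (x 0 - \<Xi> u0) \<le> \<epsilon>0 \<longrightarrow>
        (\<forall>t\<in>{0..T}. norm (x t - \<Xi> u0) \<le> m * exp (- lam * t) * norm (x 0 - \<Xi> u0))"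
    using A1a unfolding assumption_A1_def by blast
  have subU: "{umin..umax} \<subseteq> {umin - \<delta>..umax + \<delta>}" using d0 by auto
  obtain c0 LX where LX0: "0 \<le> LX" and c0b: "\<forall>u\<in>{umin..umax}. norm (\<Xi> u) \<le> c0"
    and XiL: "\<forall>u\<in>{umin..umax}. \<forall>u'\<in>{umin..umax}. norm (\<Xi> u - \<Xi> u') \<le> LX * \<bar>u - u'\<bar>"
    using consts_Xi[OF lt d0 C1] by blast
  have "norm (\<Xi> umin) \<le> c0" using c0b lt by auto
  then have c00: "0 \<le> c0" using norm_ge_zero[of "\<Xi> umin"] by linarith
  have mR: "0 \<le> m * \<epsilon>0" using m1 eps0 by simp
  define S where "S = cball (0::real^'n) (c0 + m * \<epsilon>0 + 1) \<times> {umin - 1..umax + 1}"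
  have Sc: "compact S" "convex S" unfolding S_def
    by (auto intro!: compact_Times convex_Times)
  have Sne: "S \<noteq> {}" unfolding S_def using c00 mR lt by auto
  obtain L M where L0: "0 \<le> L"
    and FL: "\<forall>p\<in>S. \<forall>q\<in>S. norm ((\<lambda>z. f (fst z) (snd z)) p - (\<lambda>z. f (fst z) (snd z)) q) \<le> L * norm (p - q)"
    and FM: "\<forall>p\<in>S. norm ((\<lambda>z. f (fst z) (snd z)) p) \<le> M"
    using consts_F[OF C2f Sc Sne] by blast
  have fLip: "norm (f x u - f x' u') \<le> L * (norm (x - x') + \<bar>u - u'\<bar>)"
    if "x \<in> cball 0 (c0 + m * \<epsilon>0 + 1)" "x' \<in> cball 0 (c0 + m * \<epsilon>0 + 1)"
      "u \<in> {umin - 1..umax + 1}" "u' \<in> {umin - 1..umax + 1}" for x x' u u'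
  proof -
    have "(x, u) \<in> S" "(x', u') \<in> S" using that by (auto simp: S_def)
    then have "norm (f x u - f x' u') \<le> L * norm ((x, u) - (x', u'))" using FL by fastforce
    also have "norm ((x, u) - (x', u')) \<le> norm (x - x') + norm (u - u')"
      using norm_Pair_le[of "x - x'" "u - u'"] by simp
    finally show ?thesis using L0 by (simp add: mult_left_mono order_trans)
  qed
  have fbd: "norm (f x u) \<le> M" if "x \<in> cball 0 (c0 + m * \<epsilon>0 + 1)" "u \<in> {umin - 1..umax + 1}" for x u
  proof -
    have "(x, u) \<in> S" using that by (auto simp: S_def)
    then show ?thesis using FM by fastforce
  qed
  have gcs: "continuous_on UNIV g \<and> (\<exists>Lg Mg. 0 \<le> Lg \<and>
      (\<forall>a\<in>cball (0::real^'n) (c0 + m * \<epsilon>0 + 1). \<forall>b\<in>cball 0 (c0 + m * \<epsilon>0 + 1). \<bar>g a - g b\<bar> \<le> Lg * dist a b)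
      \<and> (\<forall>a\<in>cball 0 (c0 + m * \<epsilon>0 + 1). \<bar>g a\<bar> \<le> Mg))"
    by (rule consts_g[OF llg compact_cball])
  then have gc: "continuous_on UNIV g" by blast
  obtain Lg Mg where Lg0: "0 \<le> Lg"
    and gL: "\<forall>a\<in>cball (0::real^'n) (c0 + m * \<epsilon>0 + 1). \<forall>b\<in>cball 0 (c0 + m * \<epsilon>0 + 1). \<bar>g a - g b\<bar> \<le> Lg * dist a b"
    and gM: "\<forall>a\<in>cball (0::real^'n) (c0 + m * \<epsilon>0 + 1). \<bar>g a\<bar> \<le> Mg"
    using gcs by blast
  define Yb where "Yb = \<bar>g (\<Xi> umin)\<bar> + \<bar>g (\<Xi> umax)\<bar>"
  define h where "h = ln (4 * m) / lam"
  have h0: "0 < h" unfolding h_def using m1 lam by (intro divide_pos_pos) auto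
  have h4: "m * exp (- lam * h) \<le> 1/4"
  proof -
    have "- lam * h = - ln (4 * m)" unfolding h_def using lam by simp
    then have "exp (- lam * h) = inverse (4 * m)" using m1 by (simp add: exp_minus)
    then have "m * exp (- lam * h) = m * inverse (4 * m)" by simp
    also have "\<dots> = 1/4" using m1 by (simp add: field_simps)
    finally show ?thesis by simp
  qed
  have pl: "plant f g \<Xi> umin umax \<epsilon>0 lam m \<mu> \<tau>p c0 L M LX Lg Mg Yb h"
  proof (rule plant.intro)
    show "umin < umax" by (rule lt)
    show "0 < \<epsilon>0" by (rule eps0)
    show "0 < lam" by (rule lam)
    show "1 \<le> m" by (rule m1)
    show "0 < \<mu>" by (rule mu)
    show "0 \<le> \<tau>p" by (rule taup)
    show "norm (x t - \<Xi> u0) \<le> m * exp (- lam * t) * norm (x 0 - \<Xi> u0)"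
      if "u0 \<in> {umin..umax}" "\<forall>t\<in>{0..T}. (x has_vector_derivative f (x t) u0) (at t within {0..T})"
        "norm (x 0 - \<Xi> u0) \<le> \<epsilon>0" "t \<in> {0..T}" for u0 T x t
      using A1f that subU by blast
    show "norm (\<Xi> u) \<le> c0" if "u \<in> {umin..umax}" for u using c0b that by blast
    show "norm (f x u - f x' u') \<le> L * (norm (x - x') + \<bar>u - u'\<bar>)"
      if "x \<in> cball 0 (c0 + m * \<epsilon>0 + 1)" "x' \<in> cball 0 (c0 + m * \<epsilon>0 + 1)"
        "u \<in> {umin - 1..umax + 1}" "u' \<in> {umin - 1..umax + 1}" for x x' u u'
      by (rule fLip[OF that])
    show "0 \<le> L" by (rule L0)
    show "norm (f x u) \<le> M" if "x \<in> cball 0 (c0 + m * \<epsilon>0 + 1)" "u \<in> {umin - 1..umax + 1}" for x u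
      by (rule fbd[OF that])
    show "norm (\<Xi> u - \<Xi> u') \<le> LX * \<bar>u - u'\<bar>" if "u \<in> {umin..umax}" "u' \<in> {umin..umax}" for u u'
      using XiL that by blast
    show "0 \<le> LX" by (rule LX0)
    show "\<bar>g x - g x'\<bar> \<le> Lg * norm (x - x')"
      if "x \<in> cball 0 (c0 + m * \<epsilon>0 + 1)" "x' \<in> cball 0 (c0 + m * \<epsilon>0 + 1)" for x x'
      using gL that by (auto simp: dist_norm)
    show "0 \<le> Lg" by (rule Lg0)
    show "\<bar>g x\<bar> \<le> Mg" if "x \<in> cball 0 (c0 + m * \<epsilon>0 + 1)" for x using gM that by blast
    show "continuous_on UNIV g" by (rule gc)
    show "\<mu> * (b - a) \<le> g (\<Xi> b) - g (\<Xi> a)" if "a \<in> {umin..umax}" "b \<in> {umin..umax}" "a < b" for a b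
      using Gm that subU by blast
    show "\<bar>y\<bar> \<le> Yb" if "y \<in> {g (\<Xi> umin)..g (\<Xi> umax)}" for y using that unfolding Yb_def by auto
    show "0 < h" by (rule h0)
    show "m * exp (- lam * h) \<le> 1/4" by (rule h4)
  qed
  have Mg0: "0 \<le> Mg" using gM mR c00 by (metis abs_ge_zero centre_in_cball add_nonneg_nonneg order_trans zero_le_one)
  have Yb0: "0 \<le> Yb" unfolding Yb_def by simp
  define W0 where "W0 = Yb + Mg"
  define D1 where "D1 = L * (h + \<tau>p) * h * exp (L * h)"
  define D where "D = D1 + LX * h"
  define LG where "LG = Lg * LX"
  define P where "P = 2 * LG"
  define Q where "Q = 2 * Lg * m"
  define c2 where "c2 = h*Q + \<mu>*h^2*Q + h*Lg*m + h*Lg*D*Q"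
  define \<beta> where "\<beta> = 4*D*P/(\<mu>*h) + 1"
  have W00: "0 \<le> W0" using Yb0 Mg0 by (simp add: W0_def)
  have D0: "0 \<le> D" unfolding D_def D1_def using L0 h0 taup LX0 by simp
  have LG0: "0 \<le> LG" unfolding LG_def using Lg0 LX0 by simp
  have P0: "0 \<le> P" unfolding P_def using LG0 by simp
  have Q0: "0 \<le> Q" unfolding Q_def using Lg0 m1 by simp
  have c20: "0 \<le> c2" unfolding c2_def using h0 Q0 mu Lg0 m1 D0 by simp
  have b0: "0 \<le> \<beta>"
  proof -
    have "0 \<le> 4*D*P/(\<mu>*h)" using D0 P0 mu h0 by (intro divide_nonneg_pos) auto
    then show ?thesis unfolding \<beta>_def by simp
  qed
  define a1 where "a1 = W0 * D"
  define a3 where "a3 = \<tau>p * W0"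
  define a4 where "a4 = LG * h + Lg * D"
  define a6 where "a6 = \<mu>*h^2*P + h*Lg*D*P"
  define a7 where "a7 = h*(P + \<mu>/2)"
  define a8 where "a8 = D*Q + \<beta>*c2 + \<mu>*h/4"
  have a0: "0 \<le> a1" "0 \<le> a3" "0 \<le> a4" "0 \<le> a6" "0 \<le> a7" "0 \<le> a8"
    unfolding a1_def a3_def a4_def a6_def a7_def a8_def
    using W00 D0 taup LG0 h0 Lg0 mu P0 Q0 b0 c20 by auto
  define \<kappa> where "\<kappa> = min (min (min ((1/2) / (a1 + 1)) ((3/4*\<epsilon>0) / (a1 + 1))) (min (1 / (a3 + 1)) ((1/2) / (a4 + 1))))
      (min (min (1 / (1 + 1)) ((\<mu>*h/2) / (a6 + 1))) (min (1 / (a7 + 1)) ((3/4) / (a8 + 1))))"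
  have \<kappa>0: "0 < \<kappa>" unfolding \<kappa>_def using a0 eps0 mu h0 by (auto intro!: divide_pos_pos)
  show ?thesis
  proof (rule exI[of _ \<kappa>], intro conjI allI impI)
    show "0 < \<kappa>" by (rule \<kappa>0)
    fix k :: real assume k: "0 < k \<and> k < \<kappa>"
    have k0: "0 < k" using k by simp
    have kl: "k < (1/2) / (a1 + 1)" "k < (3/4*\<epsilon>0) / (a1 + 1)" "k < 1 / (a3 + 1)" "k < (1/2) / (a4 + 1)"
       "k < 1 / (1 + 1)" "k < (\<mu>*h/2) / (a6 + 1)" "k < 1 / (a7 + 1)" "k < (3/4) / (a8 + 1)"
      using k unfolding \<kappa>_def by auto
    have s1: "k * W0 * D \<le> 1/2" using small[OF a0(1) _ k0 kl(1)] by (simp add: a1_def mult.assoc)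
    have s1': "k * W0 * D \<le> 3/4 * \<epsilon>0" using small[OF a0(1) _ k0 kl(2)] eps0 by (simp add: a1_def mult.assoc)
    have s2: "k * \<tau>p * W0 \<le> 1" using small[OF a0(2) _ k0 kl(3)] by (simp add: a3_def mult.assoc)
    have s3: "k * (LG * h + Lg * D) \<le> 1/2" using small[OF a0(3) _ k0 kl(4)] by (simp add: a4_def)
    have s4: "k \<le> 1" using small[of 1 1 k] kl(5) k0 by simp
    have s5: "k * (\<mu>*h^2*P + h*Lg*D*P) \<le> \<mu>*h/2" using small[OF a0(4) _ k0 kl(6)] mu h0 by (simp add: a6_def)
    have s6: "k * h * (P + \<mu>/2) \<le> 1" using small[OF a0(5) _ k0 kl(7)] by (simp add: a7_def mult.assoc)
    have s7: "k * (D*Q + \<beta>*c2 + \<mu>*h/4) \<le> 3/4" using small[OF a0(6) _ k0 kl(8)] by (simp add: a8_def)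
    show "\<exists>Tb>0. \<forall>r J rf ur x uI.
           finite J \<and> J \<subseteq> {0<..} \<and> (\<forall>t1\<in>J. \<forall>t2\<in>J. t1 \<noteq> t2 \<longrightarrow> \<bar>t1 - t2\<bar> \<ge> Tb)
           \<and> (\<forall>t\<ge>0. r t \<in> {g (\<Xi> umin) .. g (\<Xi> umax)})
           \<and> (\<forall>t\<in>{0..} - J. \<exists>e>0. \<forall>s\<ge>0. \<bar>s - t\<bar> < e \<longrightarrow> r s = r t)
           \<and> (\<exists>T0. \<forall>t\<ge>T0. r t = rf)
           \<and> ur \<in> {umin..umax} \<and> g (\<Xi> ur) = rf
           \<and> uI 0 \<in> {umin..umax} \<and> norm (x 0 - \<Xi> (uI 0)) \<le> \<epsilon>0
           \<and> closed_loop_solution f g umin umax \<tau>p k r x uI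
           \<longrightarrow> (\<exists>C \<alpha>. \<alpha> > 0 \<and> (\<forall>t\<ge>0.
                  norm (x t - \<Xi> ur) \<le> C * exp (- \<alpha> * t)
                \<and> \<bar>uI t + \<tau>p * k * (r t - g (x t)) - ur\<bar> \<le> C * exp (- \<alpha> * t)
                \<and> \<bar>g (x t) - rf\<bar> \<le> C * exp (- \<alpha> * t)))"
    proof (rule exI[of _ "1::real"], intro conjI allI impI)
      show "(0::real) < 1" by simp
      fix r J rf ur x uI
      assume H: "finite J \<and> J \<subseteq> {0<..} \<and> (\<forall>t1\<in>J. \<forall>t2\<in>J. t1 \<noteq> t2 \<longrightarrow> \<bar>t1 - t2\<bar> \<ge> 1)
           \<and> (\<forall>t\<ge>0. r t \<in> {g (\<Xi> umin) .. g (\<Xi> umax)})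
           \<and> (\<forall>t\<in>{0..} - J. \<exists>e>0. \<forall>s\<ge>0. \<bar>s - t\<bar> < e \<longrightarrow> r s = r t)
           \<and> (\<exists>T0. \<forall>t\<ge>T0. r t = rf)
           \<and> ur \<in> {umin..umax} \<and> g (\<Xi> ur) = rf
           \<and> uI 0 \<in> {umin..umax} \<and> norm (x 0 - \<Xi> (uI 0)) \<le> \<epsilon>0
           \<and> closed_loop_solution f g umin umax \<tau>p k r x uI"
      then obtain T0 where T0: "\<forall>t\<ge>T0. r t = rf" by blast
      have rY: "\<forall>t\<ge>0. r t \<in> {g (\<Xi> umin) .. g (\<Xi> umax)}" and urU: "ur \<in> {umin..umax}"
        and gur: "g (\<Xi> ur) = rf" and uI0: "uI 0 \<in> {umin..umax}" and e0: "norm (x 0 - \<Xi> (uI 0)) \<le> \<epsilon>0"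
        and sol: "closed_loop_solution f g umin umax \<tau>p k r x uI"
        using H by blast+
      define n0 where "n0 = nat \<lceil>max T0 0 / h\<rceil>"
      have n0: "T0 \<le> real n0 * h"
      proof -
        have "max T0 0 / h \<le> real n0" unfolding n0_def by linarith
        then have "max T0 0 \<le> real n0 * h" using h0 by (simp add: pos_divide_le_eq)
        then show ?thesis by simp
      qed
      have lp: "loop f g \<Xi> umin umax \<epsilon>0 lam m \<mu> \<tau>p c0 L M LX Lg Mg Yb h k r x uI W0 D1 D"
      proof (rule loop.intro[OF pl], rule loop_axioms.intro)
        show "closed_loop_solution f g umin umax \<tau>p k r x uI" by (rule sol)
        show "0 < k" by (rule k0)
        show "r t \<in> {g (\<Xi> umin)..g (\<Xi> umax)}" if "0 \<le> t" for t using rY that by blast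
        show "uI 0 \<in> {umin..umax}" by (rule uI0)
        show "norm (x 0 - \<Xi> (uI 0)) \<le> \<epsilon>0" by (rule e0)
        show "W0 = Yb + Mg" by (rule W0_def)
        show "D1 = L * (h + \<tau>p) * h * exp (L * h)" by (rule D1_def)
        show "D = D1 + LX * h" by (rule D_def)
        show "k * W0 * D \<le> 1/2" by (rule s1)
        show "k * W0 * D \<le> 3/4 * \<epsilon>0" by (rule s1')
        show "k * \<tau>p * W0 \<le> 1" by (rule s2)
      qed
      have cv: "conv f g \<Xi> umin umax \<epsilon>0 lam m \<mu> \<tau>p c0 L M LX Lg Mg Yb h k r x uI W0 D1 D rf ur T0 LG P Q c2 \<beta> n0"
      proof (rule conv.intro[OF lp], rule conv_axioms.intro)
        show "r t = rf" if "T0 \<le> t" for t using T0 that by blast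
        show "ur \<in> {umin..umax}" by (rule urU)
        show "g (\<Xi> ur) = rf" by (rule gur)
        show "T0 \<le> real n0 * h" by (rule n0)
        show "LG = Lg * LX" by (rule LG_def)
        show "P = 2 * LG" by (rule P_def)
        show "Q = 2 * Lg * m" by (rule Q_def)
        show "c2 = h*Q + \<mu>*h^2*Q + h*Lg*m + h*Lg*D*Q" by (rule c2_def)
        show "\<beta> = 4*D*P/(\<mu>*h) + 1" by (rule \<beta>_def)
        show "k*(LG*h + Lg*D) \<le> 1/2" by (rule s3)
        show "k \<le> 1" by (rule s4)
        show "k*(\<mu>*h^2*P + h*Lg*D*P) \<le> \<mu>*h/2" by (rule s5)
        show "k*h*(P + \<mu>/2) \<le> 1" by (rule s6)
        show "k*(D*Q + \<beta>*c2 + \<mu>*h/4) \<le> 3/4" by (rule s7)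
      qed
      show "\<exists>C \<alpha>. \<alpha> > 0 \<and> (\<forall>t\<ge>0.
                  norm (x t - \<Xi> ur) \<le> C * exp (- \<alpha> * t)
                \<and> \<bar>uI t + \<tau>p * k * (r t - g (x t)) - ur\<bar> \<le> C * exp (- \<alpha> * t)
                \<and> \<bar>g (x t) - rf\<bar> \<le> C * exp (- \<alpha> * t))"
        by (rule conv.converge[OF cv])
    qed
  qed
qed


end
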